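(* Assume (A1)–(A3) below (no relation between $c$ and $\eta$ is required). Then for all $R,\rho>0$ there is a constant $C=C(\rho,R,d)$ (also allowed to depend on $\alpha,\eta$) such that for all $N$, all $x\in B_{R,\rho}$, all $i\in\Gamma_N$ and all $t\ge0$, $$\mathbb E_x|X^N_i(t)|\le C(1+|i|^\rho)(1+t)e^{(1+\eta)t}.$$
   Context: Let $d\ge1$, $1<\alpha\le2$, $|i|=\sum_k|i_k|$, $|i-j|=\sum_k|i_k-j_k|$; $\{Z_i\}_{i\in\mathbb Z^d}$ i.i.d. one-dimensional symmetric $\alpha$-stable Lévy processes. $B_{R,\rho}=\{x\in\mathbb R^{\mathbb Z^d}:|x_i|\le R(|i|+1)^\rho\ \forall i\}$, $\mathbb B=\bigcup_{R,\rho>0}B_{R,\rho}$ with the product topology. (A1) each $I_i:\mathbb B\to\mathbb R$ is continuous for the product topology, $I_i(0)=0$, $|I_i(x)-I_i(y)|\le\sum_j a_{ji}|x_j-y_j|$ with $0\le a_{ij}\le e^{-|i-j|}$. (A2) each $J_i:\mathbb R\to\mathbb R$ is differentiable, $J_i'\le0$, $J_i(0)=0$, $|J_i(x)|\le\kappa'(|x|^\kappa+1)$. (A3) $\eta:=(\sup_j\sum_ia_{ij})\vee(\sup_i\sum_ja_{ij})<\infty$, $c:=\inf_{i,y}(-J_i'(y))$. $\Gamma_N=[-N,N]^d\cap\mathbb Z^d$, $I^N_i(x^N)=I_i(x^N,0)$, and $X^N$ is the solution of $dX^N_i=[J_i(X^N_i)+I^N_i(X^N)]dt+dZ_i$, $X^N_i(0)=x_i$,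 $i\in\Gamma_N$; $\mathbb E_x$ denotes expectation for this initial datum. *)

theory Defs
  imports "HOL-Probability.Probability"
begin

text \<open>Sites of the lattice Z^d are functions 'd => int for a finite type 'd (d = CARD('d)).\<close>

definition l1norm :: "('d::finite \<Rightarrow> int) \<Rightarrow> real" where
  "l1norm i = (\<Sum>k\<in>UNIV. real_of_int \<bar>i k\<bar>)"

definition l1dist :: "('d::finite \<Rightarrow> int) \<Rightarrow> ('d \<Rightarrow> int) \<Rightarrow> real" where
  "l1dist i j = (\<Sum>k\<in>UNIV. real_of_int \<bar>i k - j k\<bar>)"

definition GammaN :: "nat \<Rightarrow> ('d::finite \<Rightarrow> int) set" where
  "GammaN N = {i. \<forall>k. \<bar>i k\<bar> \<le> int N}"

definition BRrho :: "real \<Rightarrow> real \<Rightarrow> (('d::finite \<Rightarrow> int) \<Rightarrow> real) set" where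
  "BRrho R \<rho> = {x. \<forall>i. \<bar>x i\<bar> \<le> R * (l1norm i + 1) powr \<rho>}"

definition BB :: "(('d::finite \<Rightarrow> int) \<Rightarrow> real) set" where
  "BB = (\<Union>R\<in>{0<..}. \<Union>\<rho>\<in>{0<..}. BRrho R \<rho>)"

text \<open>(A1); the topology on functions is the product topology (Function_Topology).\<close>
definition A1 :: "(('d::finite \<Rightarrow> int) \<Rightarrow> ('d \<Rightarrow> int) \<Rightarrow> real)
    \<Rightarrow> (('d \<Rightarrow> int) \<Rightarrow> (('d \<Rightarrow> int) \<Rightarrow> real) \<Rightarrow> real) \<Rightarrow> bool" where
  "A1 a I \<longleftrightarrow>
     (\<forall>i j. 0 \<le> a i j \<and> a i j \<le> exp (- l1dist i j)) \<and>
     (\<forall>i. continuous_on BB (I i) \<and> I i (\<lambda>_. 0) = 0 \<and>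
        (\<forall>x\<in>BB. \<forall>y\<in>BB. \<bar>I i x - I i y\<bar> \<le> (\<Sum>\<^sub>\<infinity>j. a j i * \<bar>x j - y j\<bar>)))"

definition A2 :: "(('d::finite \<Rightarrow> int) \<Rightarrow> real \<Rightarrow> real) \<Rightarrow> real \<Rightarrow> real \<Rightarrow> bool" where
  "A2 J \<kappa> \<kappa>' \<longleftrightarrow>
     (\<forall>i. (\<forall>y. \<exists>D. (J i has_real_derivative D) (at y) \<and> D \<le> 0) \<and>
          J i 0 = 0 \<and>
          (\<forall>y. \<bar>J i y\<bar> \<le> \<kappa>' * (\<bar>y\<bar> powr \<kappa> + 1)))"

definition eta :: "(('d::finite \<Rightarrow> int) \<Rightarrow> ('d \<Rightarrow> int) \<Rightarrow> real) \<Rightarrow> real" where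
  "eta a = max (SUP j. \<Sum>\<^sub>\<infinity>i. a i j) (SUP i. \<Sum>\<^sub>\<infinity>j. a i j)"

text \<open>An i.i.d. family of one-dimensional symmetric alpha-stable Levy processes
  (normalised: E exp(iu Z(t)) = exp(-t|u|^alpha)), indexed by Z^d, on the probability space M.\<close>
definition stable_family :: "'w measure \<Rightarrow> real \<Rightarrow> (('d::finite \<Rightarrow> int) \<Rightarrow> real \<Rightarrow> 'w \<Rightarrow> real) \<Rightarrow> bool" where
  "stable_family M \<alpha> Z \<longleftrightarrow>
     prob_space M \<and>
     (\<forall>i t. Z i t \<in> borel_measurable M) \<and>
     (\<forall>i. \<forall>\<omega>\<in>space M. Z i 0 \<omega> = 0) \<and>
     (\<forall>i. AE \<omega> in M. \<forall>t\<ge>0. continuous (at_right t) (\<lambda>s. Z i s \<omega>) \<and>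
                          (t > 0 \<longrightarrow> (\<exists>l. ((\<lambda>s. Z i s \<omega>) \<longlongrightarrow> l) (at_left t)))) \<and>
     (\<forall>i s t. 0 \<le> s \<and> s \<le> t \<longrightarrow>
        char (distr M borel (\<lambda>\<omega>. Z i t \<omega> - Z i s \<omega>))
          = (\<lambda>u. complex_of_real (exp (- (t - s) * \<bar>u\<bar> powr \<alpha>)))) \<and>
     (\<forall>(F::('d \<Rightarrow> int) set) (n::nat) (tt::nat \<Rightarrow> real).
        finite F \<and> 0 \<le> tt 0 \<and> incseq tt \<longrightarrow>
        prob_space.indep_vars M (\<lambda>_. borel)
          (\<lambda>(i, k) \<omega>. Z i (tt (Suc k)) \<omega> - Z i (tt k) \<omega>) (F \<times> {..<n}))"

definition solves_N :: "'w measure \<Rightarrow> (('d::finite \<Rightarrow> int) \<Rightarrow> real \<Rightarrow> 'w \<Rightarrow> real)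
    \<Rightarrow> (('d \<Rightarrow> int) \<Rightarrow> real \<Rightarrow> real) \<Rightarrow> (('d \<Rightarrow> int) \<Rightarrow> (('d \<Rightarrow> int) \<Rightarrow> real) \<Rightarrow> real)
    \<Rightarrow> nat \<Rightarrow> (('d \<Rightarrow> int) \<Rightarrow> real) \<Rightarrow> (('d \<Rightarrow> int) \<Rightarrow> real \<Rightarrow> 'w \<Rightarrow> real) \<Rightarrow> bool" where
  "solves_N M Z J I N x X \<longleftrightarrow>
     (\<forall>i\<in>GammaN N. \<forall>t. X i t \<in> borel_measurable M) \<and>
     (AE \<omega> in M. \<forall>i\<in>GammaN N. \<forall>t\<ge>0.
        ((\<lambda>s. J i (X i s \<omega>) + I i (\<lambda>j. if j \<in> GammaN N then X j s \<omega> else 0))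
           has_integral (X i t \<omega> - x i - Z i t \<omega>)) {0..t})"

end

theory Submission
  imports Defs
begin

lemma geom_finite_le:
  fixes r :: real assumes "0 \<le> r" "r < 1" "finite K"
  shows "(\<Sum>k\<in>K. r ^ k) \<le> 1 / (1 - r)"
proof -
  have "(\<Sum>k\<in>K. r ^ k) \<le> (\<Sum>k. r ^ k)"
    using assms by (intro sum_le_suminf) (auto intro: summable_geometric)
  also have "\<dots> = 1 / (1 - r)" using assms by (simp add: suminf_geometric)
  finally show ?thesis .
qed

lemma exp_half_pow: "exp (- (real k / 2)) = exp (-1/2) ^ k"
proof -
  have "exp (- (real k / 2)) = exp (real k * (-1/2))" by simp
  also have "\<dots> = exp (-1/2) ^ k" by (rule exp_of_nat_mult)
  finally show ?thesis .
qed

lemma sum_exp_int_half: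
  fixes F :: "int set" and a :: int assumes "finite F"
  shows "(\<Sum>n\<in>F. exp (- real_of_int \<bar>n - a\<bar> / 2)) \<le> 2 / (1 - exp (-1/2))"
proof -
  define r :: real where "r = exp (-1/2)"
  have r0: "0 \<le> r" "r < 1" unfolding r_def by auto
  define F1 where "F1 = F \<inter> {a..}"
  define F2 where "F2 = F \<inter> {..<a}"
  have split: "F = F1 \<union> F2" "F1 \<inter> F2 = {}" unfolding F1_def F2_def by auto
  have fin: "finite F1" "finite F2" using assms unfolding F1_def F2_def by auto
  have s1: "(\<Sum>n\<in>F1. exp (- real_of_int \<bar>n - a\<bar> / 2)) \<le> 1 / (1 - r)"
  proof -
    have inj: "inj_on (\<lambda>n. nat (n - a)) F1" unfolding F1_def by (auto simp: inj_on_def)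
    have "(\<Sum>n\<in>F1. exp (- real_of_int \<bar>n - a\<bar> / 2)) = (\<Sum>n\<in>F1. r ^ (nat (n - a)))"
      unfolding r_def
    proof (rule sum.cong)
      fix n assume "n \<in> F1"
      then have "real_of_int \<bar>n - a\<bar> = real (nat (n - a))" unfolding F1_def by auto
      then have "exp (- real_of_int \<bar>n - a\<bar> / 2) = exp (- (real (nat (n - a)) / 2))" by (simp add: field_simps)
      also have "\<dots> = exp (- 1 / 2) ^ nat (n - a)" by (rule exp_half_pow)
      finally show "exp (- real_of_int \<bar>n - a\<bar> / 2) = exp (- 1 / 2) ^ nat (n - a)" .
    qed simp
    also have "\<dots> = (\<Sum>k\<in>(\<lambda>n. nat (n - a)) ` F1. r ^ k)"
      by (subst sum.reindex[OF inj]) (simp add: o_def)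
    also have "\<dots> \<le> 1 / (1 - r)" using r0 fin by (intro geom_finite_le) auto
    finally show ?thesis .
  qed
  have s2: "(\<Sum>n\<in>F2. exp (- real_of_int \<bar>n - a\<bar> / 2)) \<le> 1 / (1 - r)"
  proof -
    have inj: "inj_on (\<lambda>n. nat (a - n)) F2" unfolding F2_def by (auto simp: inj_on_def)
    have "(\<Sum>n\<in>F2. exp (- real_of_int \<bar>n - a\<bar> / 2)) = (\<Sum>n\<in>F2. r ^ (nat (a - n)))"
      unfolding r_def
    proof (rule sum.cong)
      fix n assume "n \<in> F2"
      then have "real_of_int \<bar>n - a\<bar> = real (nat (a - n))" unfolding F2_def by auto
      then have "exp (- real_of_int \<bar>n - a\<bar> / 2) = exp (- (real (nat (a - n)) / 2))" by (simp add: field_simps)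
      also have "\<dots> = exp (- 1 / 2) ^ nat (a - n)" by (rule exp_half_pow)
      finally show "exp (- real_of_int \<bar>n - a\<bar> / 2) = exp (- 1 / 2) ^ nat (a - n)" .
    qed simp
    also have "\<dots> = (\<Sum>k\<in>(\<lambda>n. nat (a - n)) ` F2. r ^ k)"
      by (subst sum.reindex[OF inj]) (simp add: o_def)
    also have "\<dots> \<le> 1 / (1 - r)" using r0 fin by (intro geom_finite_le) auto
    finally show ?thesis .
  qed
  have "(\<Sum>n\<in>F. exp (- real_of_int \<bar>n - a\<bar> / 2)) =
     (\<Sum>n\<in>F1. exp (- real_of_int \<bar>n - a\<bar> / 2)) + (\<Sum>n\<in>F2. exp (- real_of_int \<bar>n - a\<bar> / 2))"
    unfolding split(1) using fin split(2) by (rule sum.union_disjoint)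
  also have "\<dots> \<le> 2 / (1 - r)" using s1 s2 by simp
  finally show ?thesis unfolding r_def .
qed

definition Gc :: real where "Gc = 2 / (1 - exp (-1/2))"

lemma Gc_pos: "Gc > 0" unfolding Gc_def by simp

lemma sum_exp_lattice_half:
  fixes F :: "('d::finite \<Rightarrow> int) set" and i :: "'d \<Rightarrow> int"
  assumes "finite F"
  shows "(\<Sum>j\<in>F. exp (- l1dist i j / 2)) \<le> Gc ^ CARD('d)"
proof -
  define B where "B c = (\<lambda>j. j c) ` F" for c :: 'd
  have finB: "finite (B c)" for c unfolding B_def using assms by simp
  have sub: "F \<subseteq> PiE UNIV B" unfolding B_def by (auto simp: PiE_def Pi_def extensional_def)
  have finP: "finite (PiE UNIV B)" using finB by (simp add: finite_PiE)
  have eq: "exp (- l1dist i j / 2) = (\<Prod>c\<in>UNIV. exp (- real_of_int \<bar>j c - i c\<bar> / 2))" for j :: "'d \<Rightarrow> int"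
  proof -
    have "- l1dist i j / 2 = (\<Sum>c\<in>UNIV. - real_of_int \<bar>j c - i c\<bar> / 2)"
      unfolding l1dist_def by (simp add: sum_negf sum_divide_distrib abs_minus_commute)
    then show ?thesis by (simp add: exp_sum)
  qed
  have "(\<Sum>j\<in>F. exp (- l1dist i j / 2)) \<le> (\<Sum>j\<in>PiE UNIV B. exp (- l1dist i j / 2))"
    by (rule sum_mono2[OF finP sub]) simp
  also have "\<dots> = (\<Sum>j\<in>PiE UNIV B. \<Prod>c\<in>UNIV. exp (- real_of_int \<bar>j c - i c\<bar> / 2))"
    by (simp only: eq)
  also have "\<dots> = (\<Prod>c\<in>UNIV. \<Sum>n\<in>B c. exp (- real_of_int \<bar>n - i c\<bar> / 2))"
    by (rule prod_sum_PiE[symmetric]) (auto simp: finB)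
  also have "\<dots> \<le> (\<Prod>c\<in>(UNIV::'d set). Gc)"
  proof (rule prod_mono)
    fix c :: 'd
    have "(\<Sum>n\<in>B c. exp (- real_of_int \<bar>n - i c\<bar> / 2)) \<le> Gc" unfolding Gc_def
      by (rule sum_exp_int_half[OF finB])
    then show "0 \<le> (\<Sum>n\<in>B c. exp (- real_of_int \<bar>n - i c\<bar> / 2)) \<and>
       (\<Sum>n\<in>B c. exp (- real_of_int \<bar>n - i c\<bar> / 2)) \<le> Gc"
      by (simp add: sum_nonneg)
  qed
  also have "\<dots> = Gc ^ CARD('d)" by simp
  finally show ?thesis .
qed

lemma l1dist_sym: "l1dist i j = l1dist j i"
  unfolding l1dist_def by (simp add: abs_minus_commute)

lemma l1dist_nonneg: "l1dist i j \<ge> 0"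
  unfolding l1dist_def by (simp add: sum_nonneg)

lemma l1norm_nonneg: "l1norm i \<ge> 0"
  unfolding l1norm_def by (simp add: sum_nonneg)

lemma l1norm_tri: "l1norm j \<le> l1norm i + l1dist i j"
proof -
  have "l1norm j = (\<Sum>k\<in>UNIV. real_of_int \<bar>j k\<bar>)" by (simp add: l1norm_def)
  also have "\<dots> \<le> (\<Sum>k\<in>UNIV. real_of_int \<bar>i k\<bar> + real_of_int \<bar>i k - j k\<bar>)"
    by (rule sum_mono) linarith
  also have "\<dots> = l1norm i + l1dist i j" by (simp add: l1norm_def l1dist_def sum.distrib)
  finally show ?thesis .
qed

lemma poly_exp_bound:
  fixes \<rho> :: real
  shows "\<exists>C. \<forall>d\<ge>0. exp (- d / 2) * d * (1 + d) powr \<rho> \<le> C"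
proof -
  define g where "g d = exp (- d / 2) * d * (1 + d) powr \<rho>" for d :: real
  have "(g \<longlongrightarrow> 0) at_top" unfolding g_def by real_asymp
  then have "eventually (\<lambda>d. g d < 1) at_top" by (rule order_tendstoD) simp
  then obtain D where D: "\<And>d. d \<ge> D \<Longrightarrow> g d < 1" by (auto simp: eventually_at_top_linorder)
  have cont: "continuous_on {0..max D 0} g" unfolding g_def
    by (intro continuous_intros) auto
  have "compact (g ` {0..max D 0})" by (rule compact_continuous_image[OF cont compact_Icc])
  from compact_imp_bounded[OF this] obtain C1 where C1: "\<And>y. y \<in> g ` {0..max D 0} \<Longrightarrow> norm y \<le> C1"
    unfolding bounded_iff by blast
  show ?thesis
  proof (intro exI[of _ "max C1 1"] allI impI)
    fix d :: real assume "d \<ge> 0"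
    show "exp (- d / 2) * d * (1 + d) powr \<rho> \<le> max C1 1"
    proof (cases "d \<le> max D 0")
      case True
      then have "norm (g d) \<le> C1" using C1 \<open>d \<ge> 0\<close> by auto
      then show ?thesis unfolding g_def by simp
    next
      case False
      then have "g d < 1" using D by auto
      then show ?thesis unfolding g_def by linarith
    qed
  qed
qed

lemma summable_exp_lattice:
  fixes i :: "'d::finite \<Rightarrow> int"
  shows "(\<lambda>j. exp (- l1dist i j / 2)) summable_on UNIV"
proof (rule nonneg_bdd_above_summable_on)
  show "bdd_above (sum (\<lambda>j. exp (- l1dist i j / 2)) ` {F. F \<subseteq> UNIV \<and> finite F})"
    using sum_exp_lattice_half[of _ i] by (auto intro!: bdd_aboveI[of _ "Gc ^ CARD('d)"])
qed simp

lemma exp_le_exp_half: "d \<ge> 0 \<Longrightarrow> exp (- d) \<le> exp (- (d::real) / 2)" by simp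

lemma A1_a: assumes "A1 a I" shows "0 \<le> a i j" "a i j \<le> exp (- l1dist i j)"
  using assms unfolding A1_def by auto

lemma col_bound:
  assumes "A1 a I"
  shows "a j i \<le> exp (- l1dist i j / 2)"
proof -
  have "a j i \<le> exp (- l1dist j i)" using A1_a[OF assms] by blast
  also have "\<dots> \<le> exp (- l1dist i j / 2)" using l1dist_nonneg[of i j] by (simp add: l1dist_sym)
  finally show ?thesis .
qed

lemma col_summable:
  assumes "A1 a I" shows "(\<lambda>j. a j i) summable_on UNIV"
  by (rule summable_on_comparison_test[OF summable_exp_lattice[of i]])
     (use col_bound[OF assms] A1_a[OF assms] in auto)

lemma col_infsum_le_eta:
  assumes "A1 a I" shows "infsum (\<lambda>j. a j i) UNIV \<le> eta a"
proof -
  have bd: "infsum (\<lambda>j. a j i') UNIV \<le> Gc ^ CARD('a)" for i' :: "'a::finite \<Rightarrow> int"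
  proof (rule infsum_le_finite_sums[OF col_summable[OF assms]])
    fix F :: "('a \<Rightarrow> int) set" assume "finite F"
    have "(\<Sum>j\<in>F. a j i') \<le> (\<Sum>j\<in>F. exp (- l1dist i' j / 2))"
      by (rule sum_mono) (rule col_bound[OF assms])
    also have "\<dots> \<le> Gc ^ CARD('a)" by (rule sum_exp_lattice_half[OF \<open>finite F\<close>])
    finally show "(\<Sum>j\<in>F. a j i') \<le> Gc ^ CARD('a)" .
  qed
  have "infsum (\<lambda>j. a j i) UNIV \<le> (SUP j. \<Sum>\<^sub>\<infinity>i. a i j)"
    by (rule cSUP_upper[where f="\<lambda>j. \<Sum>\<^sub>\<infinity>i. a i j"]) (use bd in \<open>auto intro!: bdd_aboveI2\<close>)
  also have "\<dots> \<le> eta a" unfolding eta_def by simp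
  finally show ?thesis .
qed

lemma col_sum_le_eta:
  assumes "A1 a I" "finite F" shows "(\<Sum>j\<in>F. a j i) \<le> eta a"
proof -
  have "(\<Sum>j\<in>F. a j i) \<le> infsum (\<lambda>j. a j i) UNIV"
    by (rule finite_sum_le_infsum[OF col_summable[OF assms(1)] assms(2)]) (use A1_a[OF assms(1)] in auto)
  also have "\<dots> \<le> eta a" by (rule col_infsum_le_eta[OF assms(1)])
  finally show ?thesis .
qed

lemma eta_nonneg: assumes "A1 a I" shows "eta a \<ge> 0"
proof -
  have "(\<Sum>j\<in>{}. a j i) \<le> eta a" by (rule col_sum_le_eta[OF assms]) simp
  then show ?thesis by simp
qed

lemma powr_one_plus_bound:
  fixes y \<rho> :: real assumes "y \<ge> 0" "\<rho> \<ge> 0"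
  shows "(1 + y) powr \<rho> \<le> 1 + \<rho> * y * (1 + y) powr \<rho>"
proof -
  have l: "ln (1 + y) \<le> y" using assms(1) by (rule ln_add_one_self_le_self)
  have "(1 + y) powr (- \<rho>) = exp (- \<rho> * ln (1 + y))" using assms by (simp add: powr_def)
  also have "\<dots> \<ge> 1 + (- \<rho> * ln (1 + y))" by (rule exp_ge_add_one_self)
  finally have "(1 + y) powr (- \<rho>) \<ge> 1 - \<rho> * y"
    using mult_left_mono[OF l assms(2)] by linarith
  then have "(1 + y) powr \<rho> * (1 + y) powr (- \<rho>) \<ge> (1 + y) powr \<rho> * (1 - \<rho> * y)"
    by (rule mult_left_mono) simp
  moreover have "(1 + y) powr \<rho> * (1 + y) powr (- \<rho>) = 1"
    using assms by (simp add: powr_add[symmetric])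
  ultimately show ?thesis by (simp add: algebra_simps)
qed

lemma weight_lemma:
  fixes \<rho> :: real assumes "\<rho> > 0"
  shows "\<exists>L\<ge>1. \<forall>(a :: ('d::finite \<Rightarrow> int) \<Rightarrow> ('d \<Rightarrow> int) \<Rightarrow> real) I. A1 a I \<longrightarrow>
    (\<forall>F i. finite F \<longrightarrow> (\<Sum>j\<in>F. a j i * (L + l1norm j) powr \<rho>) \<le> (eta a + 1/2) * (L + l1norm i) powr \<rho>)"
proof -
  obtain C where C: "\<And>d. d \<ge> 0 \<Longrightarrow> exp (- d / 2) * d * (1 + d) powr \<rho> \<le> C"
    using poly_exp_bound[of \<rho>] by blast
  have C0: "C \<ge> 0" using C[of 0] by simp
  define K0 where "K0 = C * Gc ^ CARD('d)"
  have K0: "K0 \<ge> 0" unfolding K0_def using C0 Gc_pos by simp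
  define L where "L = max 1 (2 * \<rho> * K0)"
  have L1: "L \<ge> 1" unfolding L_def by simp
  have LK: "\<rho> * K0 / L \<le> 1/2"
  proof -
    have "2 * (\<rho> * K0) \<le> L" unfolding L_def by simp
    then show ?thesis using L1 by (simp add: field_simps)
  qed
  show ?thesis
  proof (intro exI[of _ L] conjI L1 allI impI)
    fix a :: "('d \<Rightarrow> int) \<Rightarrow> ('d \<Rightarrow> int) \<Rightarrow> real" and I :: "('d \<Rightarrow> int) \<Rightarrow> (('d \<Rightarrow> int) \<Rightarrow> real) \<Rightarrow> real"
      and F :: "('d \<Rightarrow> int) set" and i :: "'d \<Rightarrow> int"
    assume A: "A1 a I" and F: "finite F"
    define Wi where "Wi = (L + l1norm i) powr \<rho>"
    have Wi0: "Wi \<ge> 0" unfolding Wi_def by simp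
    have key: "a j i * (L + l1norm j) powr \<rho> \<le> a j i * Wi + Wi * (\<rho> / L) * (C * exp (- l1dist i j / 2))" for j
    proof -
      define d where "d = l1dist i j"
      have d0: "d \<ge> 0" unfolding d_def by (rule l1dist_nonneg)
      have aji: "0 \<le> a j i" "a j i \<le> exp (- d)"
        using A1_a[OF A, of j i] by (auto simp: d_def l1dist_sym)
      have "L + l1norm j \<le> (L + l1norm i) * (1 + d / L)"
      proof -
        have "l1norm j \<le> l1norm i + d" unfolding d_def by (rule l1norm_tri)
        moreover have "(L + l1norm i) * (d / L) \<ge> d"
          using L1 d0 l1norm_nonneg[of i] by (simp add: field_simps)
        ultimately show ?thesis by (simp add: algebra_simps)
      qed
      then have W1: "(L + l1norm j) powr \<rho> \<le> ((L + l1norm i) * (1 + d / L)) powr \<rho>"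
        using L1 l1norm_nonneg[of j] assms by (intro powr_mono2) auto
      have W2: "((L + l1norm i) * (1 + d / L)) powr \<rho> = Wi * (1 + d / L) powr \<rho>"
        unfolding Wi_def using L1 l1norm_nonneg[of i] d0 by (simp add: powr_mult)
      have W3: "(1 + d / L) powr \<rho> \<le> 1 + \<rho> * (d / L) * (1 + d / L) powr \<rho>"
        using d0 L1 assms by (intro powr_one_plus_bound) auto
      have W4: "(1 + d / L) powr \<rho> \<le> (1 + d) powr \<rho>"
        using d0 L1 assms by (intro powr_mono2) (auto simp: field_simps intro: mult_left_mono[of 1 L d, simplified])
      have W5: "\<rho> * (d / L) * (1 + d / L) powr \<rho> \<le> \<rho> * (d / L) * (1 + d) powr \<rho>"
        using W4 d0 L1 assms by (intro mult_left_mono) auto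
      have W: "(L + l1norm j) powr \<rho> \<le> Wi * (1 + \<rho> * (d / L) * (1 + d) powr \<rho>)"
        using W1 W2 W3 W5 Wi0 mult_left_mono[OF order.trans[OF W3] Wi0]
        by (smt (verit) mult_left_mono)
      have S1: "a j i * (L + l1norm j) powr \<rho> \<le> a j i * (Wi * (1 + \<rho> * (d / L) * (1 + d) powr \<rho>))"
        by (rule mult_left_mono[OF W aji(1)])
      have S2: "a j i * (Wi * (1 + \<rho> * (d / L) * (1 + d) powr \<rho>)) = a j i * Wi + Wi * (\<rho> / L) * (a j i * d * (1 + d) powr \<rho>)"
        by (simp add: algebra_simps)
      have S3: "a j i * d * (1 + d) powr \<rho> \<le> exp (- d) * d * (1 + d) powr \<rho>"
        using aji d0 by (intro mult_right_mono) auto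
      have S4: "exp (- d) * d * (1 + d) powr \<rho> = exp (- d / 2) * (exp (- d / 2) * d * (1 + d) powr \<rho>)"
      proof -
        have "exp (- d) = exp (- d / 2 + - d / 2)" by simp
        also have "\<dots> = exp (- d / 2) * exp (- d / 2)" by (rule exp_add)
        finally show ?thesis by (simp add: algebra_simps)
      qed
      have S5: "exp (- d / 2) * (exp (- d / 2) * d * (1 + d) powr \<rho>) \<le> exp (- d / 2) * C"
        using C[OF d0] by (intro mult_left_mono) auto
      have S6: "Wi * (\<rho> / L) \<ge> 0" using Wi0 assms L1 by simp
      have "Wi * (\<rho> / L) * (a j i * d * (1 + d) powr \<rho>) \<le> Wi * (\<rho> / L) * (exp (- d / 2) * C)"
        using order.trans[OF S3[unfolded S4] S5] S6 by (rule mult_left_mono)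
      then show ?thesis using S1 S2 by (simp add: d_def mult.commute)
    qed
    have "(\<Sum>j\<in>F. a j i * (L + l1norm j) powr \<rho>) \<le> (\<Sum>j\<in>F. a j i * Wi + Wi * (\<rho> / L) * (C * exp (- l1dist i j / 2)))"
      by (rule sum_mono) (rule key)
    also have "\<dots> = (\<Sum>j\<in>F. a j i) * Wi + Wi * (\<rho> / L) * C * (\<Sum>j\<in>F. exp (- l1dist i j / 2))"
      by (simp add: sum.distrib sum_distrib_left sum_distrib_right algebra_simps)
    also have "\<dots> \<le> eta a * Wi + Wi * (\<rho> / L) * C * Gc ^ CARD('d)"
      using col_sum_le_eta[OF A F, of i] sum_exp_lattice_half[OF F, of i] Wi0 C0 assms L1
      by (intro add_mono mult_right_mono mult_left_mono) auto
    also have "\<dots> = Wi * (eta a + \<rho> * K0 / L)" unfolding K0_def by (simp add: algebra_simps)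
    also have "\<dots> \<le> Wi * (eta a + 1/2)" using LK Wi0 by (intro mult_left_mono) auto
    finally show "(\<Sum>j\<in>F. a j i * (L + l1norm j) powr \<rho>) \<le> (eta a + 1/2) * (L + l1norm i) powr \<rho>"
      unfolding Wi_def by (simp add: mult.commute)
  qed
qed

lemma cont_left_gt:
  fixes f :: "real \<Rightarrow> real"
  assumes "continuous_on {a..b} f" "a < b" "f b > c"
  shows "\<exists>\<sigma>\<in>{a..<b}. \<forall>t\<in>{\<sigma>..b}. f t > c"
proof -
  have "b \<in> {a..b}" using assms by auto
  with assms(1) obtain d where d: "d > 0" "\<And>x'. x' \<in> {a..b} \<Longrightarrow> dist x' b < d \<Longrightarrow> dist (f x') (f b) < f b - c"
    unfolding continuous_on_iff using assms(3) by (metis diff_gt_0_iff_gt)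
  define \<sigma> where "\<sigma> = max a (b - d / 2)"
  have "\<sigma> \<in> {a..<b}" unfolding \<sigma>_def using d assms by auto
  moreover have "f t > c" if "t \<in> {\<sigma>..b}" for t
  proof -
    have "t \<in> {a..b}" "dist t b < d" using that d unfolding \<sigma>_def by (auto simp: dist_real_def)
    then have "dist (f t) (f b) < f b - c" by (rule d(2))
    then show ?thesis by (auto simp: dist_real_def)
  qed
  ultimately show ?thesis by blast
qed

lemma cont_left_le:
  fixes f :: "real \<Rightarrow> real"
  assumes "continuous_on {a..b} f" "a < b" "\<And>t. t \<in> {a..<b} \<Longrightarrow> f t < c"
  shows "f b \<le> c"
proof (rule ccontr)
  assume "\<not> f b \<le> c"
  then obtain \<sigma> where s1: "\<sigma> \<in> {a..<b}" and s2: "\<And>t. t\<in>{\<sigma>..b} \<Longrightarrow> f t > c"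
    using cont_left_gt[OF assms(1,2), of c] by auto
  have "f \<sigma> > c" using s1 by (intro s2) auto
  with assms(3)[OF s1] show False by simp
qed

lemma pathwise_bound:
  fixes G :: "'i set" and X z g :: "'i \<Rightarrow> real \<Rightarrow> real" and x s V :: "'i \<Rightarrow> real"
    and A :: "'i \<Rightarrow> 'i \<Rightarrow> real" and lam T :: real
  assumes finG: "finite G" and T0: "T \<ge> 0" and lam0: "lam \<ge> 0"
    and int: "\<And>j t. j \<in> G \<Longrightarrow> t \<in> {0..T} \<Longrightarrow> (g j has_integral (X j t - x j - z j t)) {0..t}"
    and zb: "\<And>j t. j \<in> G \<Longrightarrow> t \<in> {0..T} \<Longrightarrow> \<bar>z j t\<bar> \<le> s j"
    and sgn_pos: "\<And>j t. j \<in> G \<Longrightarrow> t \<in> {0..T} \<Longrightarrow> X j t > 0 \<Longrightarrow> g j t \<le> (\<Sum>k\<in>G. A k j * \<bar>X k t\<bar>)"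
    and sgn_neg: "\<And>j t. j \<in> G \<Longrightarrow> t \<in> {0..T} \<Longrightarrow> X j t < 0 \<Longrightarrow> - g j t \<le> (\<Sum>k\<in>G. A k j * \<bar>X k t\<bar>)"
    and A0: "\<And>k j. A k j \<ge> 0"
    and Vb: "\<And>j. j \<in> G \<Longrightarrow> V j \<ge> \<bar>x j\<bar> + 2 * s j"
    and AV: "\<And>j. j \<in> G \<Longrightarrow> (\<Sum>k\<in>G. A k j * V k) \<le> lam * V j"
    and A1: "\<And>j. j \<in> G \<Longrightarrow> (\<Sum>k\<in>G. A k j) \<le> lam"
  shows "\<And>j. j \<in> G \<Longrightarrow> \<bar>X j T\<bar> \<le> exp (lam * T) * V j"
proof -
  define y where "y j t = X j t - z j t" for j t
  have s0: "s j \<ge> 0" if "j \<in> G" for j using zb[OF that, of 0] T0 by auto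
  have gint: "g j integrable_on {0..T}" if "j \<in> G" for j using int[OF that, of T] T0 by auto
  have yeq: "y j t = x j + integral {0..t} (g j)" if "j \<in> G" "t \<in> {0..T}" for j t
    using integral_unique[OF int[OF that]] unfolding y_def by simp
  have ycont: "continuous_on {0..T} (y j)" if "j \<in> G" for j
  proof -
    have "continuous_on {0..T} (\<lambda>t. x j + integral {0..t} (g j))"
      by (intro continuous_intros indefinite_integral_continuous_1 gint that)
    then show ?thesis by (rule continuous_on_eq) (simp add: yeq[OF that])
  qed
  have main: "\<bar>y j t\<bar> < exp (lam * t) * (V j + e) - s j" if e: "e > 0" and j: "j \<in> G" and t: "t \<in> {0..T}" for e j t
  proof (rule ccontr)
    assume nt: "\<not> ?thesis"
    define u where "u k t = exp (lam * t) * (V k + e) - s k" for k t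
    have ucont: "continuous_on S (u k)" for k S unfolding u_def by (intro continuous_intros)
    define Bad where "Bad = (\<Union>k\<in>G. {0..T} \<inter> (\<lambda>t. u k t - \<bar>y k t\<bar>) -` {..0})"
    have closedBad: "closed Bad" unfolding Bad_def using finG
      by (intro closed_UN ballI continuous_closed_preimage continuous_intros ucont ycont) auto
    have tBad: "t \<in> Bad" unfolding Bad_def using nt j t by (auto simp: u_def intro!: bexI[of _ j])
    define \<tau> where "\<tau> = Inf Bad"
    have bddB: "bdd_below Bad" unfolding Bad_def by (auto intro!: bdd_belowI[of _ 0])
    have \<tau>B: "\<tau> \<in> Bad" unfolding \<tau>_def using tBad bddB closedBad by (intro closed_contains_Inf) auto
    then obtain k0 where k0: "k0 \<in> G" "\<tau> \<in> {0..T}" "u k0 \<tau> \<le> \<bar>y k0 \<tau>\<bar>" unfolding Bad_def by auto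
    have before: "\<bar>y k t'\<bar> < u k t'" if "k \<in> G" "t' \<in> {0..<\<tau>}" for k t'
    proof (rule ccontr)
      assume "\<not> \<bar>y k t'\<bar> < u k t'"
      then have "t' \<in> Bad" unfolding Bad_def using that k0(2) by (auto intro!: bexI[of _ k])
      then have "\<tau> \<le> t'" unfolding \<tau>_def using bddB by (rule cInf_lower)
      then show False using that by auto
    qed
    have u0: "\<bar>y k 0\<bar> < u k 0" if "k \<in> G" for k
    proof -
      have "y k 0 = x k" using yeq[OF that, of 0] T0 by simp
      then show ?thesis unfolding u_def using Vb[OF that] s0[OF that] e by simp
    qed
    have \<tau>pos: "\<tau> > 0"
    proof (rule ccontr)
      assume "\<not> \<tau> > 0" then have "\<tau> = 0" using k0(2) by auto
      then show False using u0[OF k0(1)] k0(3) by simp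
    qed
    have atTau: "\<bar>y k \<tau>\<bar> \<le> u k \<tau>" if "k \<in> G" for k
    proof -
      have cc: "continuous_on {0..\<tau>} (\<lambda>t. \<bar>y k t\<bar> - u k t)"
        using continuous_on_subset[OF ycont[OF that], of "{0..\<tau>}"] k0(2)
        by (intro continuous_intros ucont) auto
      have "\<bar>y k \<tau>\<bar> - u k \<tau> \<le> 0"
        by (rule cont_left_le[OF cc \<tau>pos]) (use before[OF that] in auto)
      then show ?thesis by simp
    qed
    have eqTau: "\<bar>y k0 \<tau>\<bar> = u k0 \<tau>" using atTau[OF k0(1)] k0(3) by simp
    obtain \<theta> :: real where th: "\<theta> = 1 \<or> \<theta> = -1" "\<theta> * y k0 \<tau> = u k0 \<tau>"
      using eqTau by (cases "y k0 \<tau> \<ge> 0") (auto intro: that[of 1] that[of "-1"])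
    have uge: "u k0 \<tau> > s k0"
    proof -
      have "exp (lam * \<tau>) \<ge> 1" using lam0 \<tau>pos by simp
      moreover have "V k0 + e > 0" using Vb[OF k0(1)] s0[OF k0(1)] e by linarith
      ultimately have "exp (lam * \<tau>) * (V k0 + e) \<ge> V k0 + e"
        by (metis mult_le_cancel_right1 order_less_imp_not_less)
      then show ?thesis unfolding u_def using Vb[OF k0(1)] s0[OF k0(1)] e by linarith
    qed
    have cth: "continuous_on {0..\<tau>} (\<lambda>t. \<theta> * y k0 t)"
      using continuous_on_subset[OF ycont[OF k0(1)], of "{0..\<tau>}"] k0(2)
      by (intro continuous_intros) auto
    obtain \<sigma> where \<sigma>: "\<sigma> \<in> {0..<\<tau>}" "\<And>t. t \<in> {\<sigma>..\<tau>} \<Longrightarrow> \<theta> * y k0 t > s k0"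
      using cont_left_gt[OF cth \<tau>pos, of "s k0"] th(2) uge by auto
    define h where "h t = lam * (exp (lam * t) * (V k0 + e))" for t
    have gle: "\<theta> * g k0 t \<le> h t" if tt: "t \<in> {\<sigma>..\<tau>}" for t
    proof -
      have tT: "t \<in> {0..T}" using tt \<sigma>(1) k0(2) by auto
      have ty: "\<theta> * y k0 t > s k0" by (rule \<sigma>(2)[OF tt])
      have zz: "\<bar>z k0 t\<bar> \<le> s k0" by (rule zb[OF k0(1) tT])
      have "\<theta> * g k0 t \<le> (\<Sum>k\<in>G. A k k0 * \<bar>X k t\<bar>)"
      proof (cases "\<theta> = 1")
        case True
        then have "X k0 t > 0" using ty zz unfolding y_def by auto
        then show ?thesis using sgn_pos[OF k0(1) tT] True by simp
      next
        case False
        then have "\<theta> = -1" using th(1) by auto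
        then have "X k0 t < 0" using ty zz unfolding y_def by auto
        then show ?thesis using sgn_neg[OF k0(1) tT] \<open>\<theta> = -1\<close> by simp
      qed
      also have "\<dots> \<le> (\<Sum>k\<in>G. A k k0 * (exp (lam * t) * (V k + e)))"
      proof (rule sum_mono)
        fix k assume k: "k \<in> G"
        have "\<bar>y k t\<bar> \<le> u k t"
        proof (cases "t = \<tau>")
          case True then show ?thesis using atTau[OF k] by simp
        next
          case False then show ?thesis using before[OF k, of t] tt \<sigma>(1) by auto
        qed
        moreover have "\<bar>X k t\<bar> \<le> \<bar>y k t\<bar> + s k" using zb[OF k tT] unfolding y_def by linarith
        ultimately have "\<bar>X k t\<bar> \<le> exp (lam * t) * (V k + e)" unfolding u_def by linarith
        then show "A k k0 * \<bar>X k t\<bar> \<le> A k k0 * (exp (lam * t) * (V k + e))"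
          by (rule mult_left_mono) (rule A0)
      qed
      also have "\<dots> = exp (lam * t) * ((\<Sum>k\<in>G. A k k0 * V k) + e * (\<Sum>k\<in>G. A k k0))"
        by (simp add: sum_distrib_left sum_distrib_right sum.distrib algebra_simps)
      also have "\<dots> \<le> exp (lam * t) * (lam * V k0 + e * lam)"
        using AV[OF k0(1)] A1[OF k0(1)] e by (intro mult_left_mono add_mono) auto
      also have "\<dots> = h t" unfolding h_def by (simp add: algebra_simps)
      finally show ?thesis .
    qed
    have hint: "(h has_integral (exp (lam * \<tau>) * (V k0 + e) - exp (lam * \<sigma>) * (V k0 + e))) {\<sigma>..\<tau>}"
    proof -
      have "((\<lambda>t. exp (lam * t) * (V k0 + e)) has_vector_derivative h t) (at t within {\<sigma>..\<tau>})" for t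
        unfolding h_def has_real_derivative_iff_has_vector_derivative[symmetric]
        by (auto intro!: derivative_eq_intros)
      then show ?thesis using \<sigma>(1) by (intro fundamental_theorem_of_calculus) auto
    qed
    have gint2: "g k0 integrable_on {\<sigma>..\<tau>}"
      by (rule integrable_subinterval_real[OF gint[OF k0(1)]]) (use \<sigma>(1) k0(2) in auto)
    have comb: "integral {0..\<sigma>} (g k0) + integral {\<sigma>..\<tau>} (g k0) = integral {0..\<tau>} (g k0)"
      by (rule Henstock_Kurzweil_Integration.integral_combine)
         (use \<sigma>(1) k0(2) in \<open>auto intro: integrable_subinterval_real[OF gint[OF k0(1)]]\<close>)
    have diff: "y k0 \<tau> - y k0 \<sigma> = integral {\<sigma>..\<tau>} (g k0)"
      using yeq[OF k0(1), of \<tau>] yeq[OF k0(1), of \<sigma>] comb \<sigma>(1) k0(2) by auto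
    have "\<theta> * integral {\<sigma>..\<tau>} (g k0) = integral {\<sigma>..\<tau>} (\<lambda>t. \<theta> * g k0 t)"
      by (simp add: integral_mult_right)
    also have "\<dots> \<le> integral {\<sigma>..\<tau>} h"
      by (rule integral_le) (use gint2 hint gle in \<open>auto intro: integrable_on_mult_right has_integral_integrable\<close>)
    also have "\<dots> = exp (lam * \<tau>) * (V k0 + e) - exp (lam * \<sigma>) * (V k0 + e)"
      by (rule integral_unique[OF hint])
    finally have I1: "\<theta> * (y k0 \<tau> - y k0 \<sigma>) \<le> exp (lam * \<tau>) * (V k0 + e) - exp (lam * \<sigma>) * (V k0 + e)"
      using diff by simp
    have "\<theta> * y k0 \<sigma> \<le> \<bar>y k0 \<sigma>\<bar>" using th(1) by auto
    also have "\<bar>y k0 \<sigma>\<bar> < u k0 \<sigma>" by (rule before[OF k0(1) \<sigma>(1)])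
    finally have "\<theta> * y k0 \<tau> < u k0 \<tau>" using I1 unfolding u_def by (simp add: algebra_simps)
    then show False using th(2) by simp
  qed
  fix j assume j: "j \<in> G"
  have "\<bar>y j T\<bar> + s j \<le> exp (lam * T) * V j"
  proof (rule field_le_epsilon)
    fix e :: real assume e: "e > 0"
    have "\<bar>y j T\<bar> < exp (lam * T) * (V j + e / exp (lam * T)) - s j"
      using main[of "e / exp (lam * T)" j T] e j T0 by auto
    then show "\<bar>y j T\<bar> + s j \<le> exp (lam * T) * V j + e" by (simp add: algebra_simps)
  qed
  moreover have "\<bar>X j T\<bar> \<le> \<bar>y j T\<bar> + s j" using zb[OF j, of T] T0 unfolding y_def by auto
  ultimately show "\<bar>X j T\<bar> \<le> exp (lam * T) * V j" by linarith
qed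

lemma real_distribution_tail:
  fixes N :: "real measure"
  assumes RD: "real_distribution N" and "u > 0"
  shows "u * measure N {x. abs x \<ge> 2 / u} \<le> Re (CLBINT t:{-u..u}. 1 - char N t)"
proof -
  interpret N: real_distribution N by fact
  have *: "\<And>u x. u > 0 \<Longrightarrow> x \<noteq> 0 \<Longrightarrow> (CLBINT t:{-u..u}. 1 - iexp (t * x)) =
      2 * (u  - sin (u * x) / x)"
  proof -
    fix u :: real and x :: real
    assume "u > 0" and "x \<noteq> 0"
    hence "(CLBINT t:{-u..u}. 1 - iexp (t * x)) = (CLBINT t=-u..u. 1 - iexp (t * x))"
      by (subst interval_integral_Icc, auto)
    also have "\<dots> = (CLBINT t=-u..ereal 0. 1 - iexp (t * x)) + (CLBINT t= ereal 0..u. 1 - iexp (t * x))"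
      using \<open>u > 0\<close>
      by (subst interval_integral_sum; force simp add: interval_integrable_isCont)
    also have "\<dots> = (CLBINT t=ereal 0..u. 1 - iexp (t * -x)) + (CLBINT t=ereal 0..u. 1 - iexp (t * x))"
      by (subst interval_integral_reflect, auto)
    also have "... = CLBINT xa=ereal 0..ereal u. 1 - iexp (xa * - x) + (1 - iexp (xa * x))"
      by (subst interval_lebesgue_integral_add (2) [symmetric]) (auto simp: interval_integrable_isCont)
    also have "\<dots> = (LBINT t=ereal 0..u. 2 - 2 * cos (t * x))"
      unfolding exp_Euler cos_of_real by (simp flip: interval_lebesgue_integral_of_real)
    also have "\<dots> = 2 * u - 2 * sin (u * x) / x"
      by (subst interval_lebesgue_integral_diff)
         (auto intro!: interval_integrable_isCont
               simp: interval_lebesgue_integral_of_real integral_cos [OF \<open>x \<noteq> 0\<close>] mult.commute[of _ x])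
    finally show "(CLBINT t:{-u..u}. 1 - iexp (t * x)) = 2 * (u  - sin (u * x) / x)"
      by (simp add: field_simps)
  qed
  interpret P: pair_sigma_finite N lborel ..
  have Mn1 [simp]: "measure N UNIV = 1" by (metis N.prob_space N.space_eq_univ)
  have Mn2 [simp]: "\<And>x. complex_integrable N (\<lambda>t. exp (\<i> * complex_of_real (x * t)))"
    by (rule N.integrable_const_bound [where B = 1], auto)
  have Mn3: "set_integrable (N \<Otimes>\<^sub>M lborel) (UNIV \<times> {- u..u}) (\<lambda>a. 1 - exp (\<i> * complex_of_real (snd a * fst a)))"
    using \<open>0 < u\<close>
    unfolding set_integrable_def
    by (intro integrableI_bounded_set_indicator [where B="2"])
       (auto simp: lborel.emeasure_pair_measure_Times ennreal_mult_less_top not_less top_unique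
             split: split_indicator
             intro!: order_trans [OF norm_triangle_ineq4])
  have "(CLBINT t:{-u..u}. 1 - char N t) =
      (CLBINT t:{-u..u}. (CLINT x | N. 1 - iexp (t * x)))"
    unfolding char_def by (rule set_lebesgue_integral_cong, auto simp del: of_real_mult)
  also have "\<dots> = (CLBINT t. (CLINT x | N. indicator {-u..u} t *\<^sub>R (1 - iexp (t * x))))"
    unfolding set_lebesgue_integral_def
    by (rule Bochner_Integration.integral_cong) (auto split: split_indicator)
  also have "\<dots> = (CLINT x | N. (CLBINT t:{-u..u}. 1 - iexp (t * x)))"
    using Mn3 by (subst P.Fubini_integral) (auto simp: indicator_times split_beta' set_integrable_def set_lebesgue_integral_def)
  also have "\<dots> = (CLINT x | N. (if x = 0 then 0 else 2 * (u  - sin (u * x) / x)))"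
    using \<open>u > 0\<close> by (intro Bochner_Integration.integral_cong, auto simp add: * simp del: of_real_mult)
  also have "\<dots> = (LINT x | N. (if x = 0 then 0 else 2 * (u  - sin (u * x) / x)))"
    by (rule integral_complex_of_real)
  finally have "Re (CLBINT t:{-u..u}. 1 - char N t) =
     (LINT x | N. (if x = 0 then 0 else 2 * (u  - sin (u * x) / x)))" by simp
  also have "\<dots> \<ge> (LINT x : {x. abs x \<ge> 2 / u} | N. u)"
  proof -
    have "complex_integrable N (\<lambda>x. CLBINT t:{-u..u}. 1 - iexp (snd (x, t) * fst (x, t)))"
      using Mn3 unfolding set_integrable_def set_lebesgue_integral_def
      by (intro P.integrable_fst) (simp add: indicator_times split_beta')
    hence "complex_integrable N (\<lambda>x. if x = 0 then 0 else 2 * (u  - sin (u * x) / x))"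
      using \<open>u > 0\<close>
      unfolding set_integrable_def
      by (subst Bochner_Integration.integrable_cong) (auto simp add: * simp del: of_real_mult)
    hence **: "integrable N (\<lambda>x. if x = 0 then 0 else 2 * (u  - sin (u * x) / x))"
      unfolding complex_of_real_integrable_eq .
    have "2 * sin x \<le> x" if "2 \<le> x" for x :: real
      by (rule order_trans[OF _ \<open>2 \<le> x\<close>]) auto
    moreover have "x \<le> 2 * sin x" if "x \<le> - 2" for x :: real
      by (rule order_trans[OF \<open>x \<le> - 2\<close>]) auto
    moreover have "x < 0 \<Longrightarrow> x \<le> sin x" for x :: real
      using sin_x_le_x[of "-x"] by simp
    ultimately show ?thesis
      using \<open>u > 0\<close> unfolding set_lebesgue_integral_def
      by (intro integral_mono [OF _ **])
         (auto simp: divide_simps sin_x_le_x mult.commute[of u] mult_neg_pos top_unique less_top[symmetric]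
               split: split_indicator)
  qed
  also (xtrans) have "(LINT x : {x. abs x \<ge> 2 / u} | N. u) = u * measure N {x. abs x \<ge> 2 / u}"
    unfolding set_lebesgue_integral_def
    by (simp add: N.emeasure_eq_measure)
  finally show "u * measure N {x. abs x \<ge> 2 / u} \<le> Re (CLBINT t:{-u..u}. 1 - char N t)" .
qed

lemma sf_prob: "stable_family M \<alpha> Z \<Longrightarrow> prob_space M" unfolding stable_family_def by blast
lemma sf_meas: "stable_family M \<alpha> Z \<Longrightarrow> Z i t \<in> borel_measurable M" unfolding stable_family_def by blast
lemma sf_zero: "stable_family M \<alpha> Z \<Longrightarrow> \<omega> \<in> space M \<Longrightarrow> Z i 0 \<omega> = 0" unfolding stable_family_def by blast
lemma sf_char: "stable_family M \<alpha> Z \<Longrightarrow> 0 \<le> s \<Longrightarrow> s \<le> t \<Longrightarrow>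
   char (distr M borel (\<lambda>\<omega>. Z i t \<omega> - Z i s \<omega>)) = (\<lambda>u. complex_of_real (exp (- (t - s) * \<bar>u\<bar> powr \<alpha>)))"
  unfolding stable_family_def by blast
lemma sf_indep: "stable_family M \<alpha> Z \<Longrightarrow> finite F \<Longrightarrow> 0 \<le> tt 0 \<Longrightarrow> incseq tt \<Longrightarrow>
   prob_space.indep_vars M (\<lambda>_. borel) (\<lambda>(i, k) \<omega>. Z i (tt (Suc k)) \<omega> - Z i (tt k) \<omega>) (F \<times> {..<n})"
  unfolding stable_family_def by blast
lemma sf_rc: "stable_family M \<alpha> Z \<Longrightarrow> AE \<omega> in M. \<forall>t\<ge>0. continuous (at_right t) (\<lambda>s. Z i s \<omega>)"
proof -
  assume "stable_family M \<alpha> Z"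
  then have "AE \<omega> in M. \<forall>t\<ge>0. continuous (at_right t) (\<lambda>s. Z i s \<omega>) \<and>
      (t > 0 \<longrightarrow> (\<exists>l. ((\<lambda>s. Z i s \<omega>) \<longlongrightarrow> l) (at_left t)))"
    unfolding stable_family_def by blast
  then show ?thesis by (rule AE_mp) (intro AE_I2, auto)
qed

lemma stable_tail:
  assumes sf: "stable_family M \<alpha> Z" and a0: "\<alpha> > 0" and st: "0 \<le> s" "s \<le> t" and r0: "r > 0"
  shows "measure M {\<omega>\<in>space M. r \<le> \<bar>Z i t \<omega> - Z i s \<omega>\<bar>} \<le> 2 * 2 powr \<alpha> * (t - s) / r powr \<alpha>"
proof -
  interpret prob_space M by (rule sf_prob[OF sf])
  define D where "D \<omega> = Z i t \<omega> - Z i s \<omega>" for \<omega>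
  have Dm: "D \<in> borel_measurable M" unfolding D_def using sf_meas[OF sf] by measurable
  define N where "N = distr M borel D"
  have RD: "real_distribution N" unfolding N_def using Dm by simp
  define u where "u = 2 / r"
  have u0: "u > 0" and ur: "2 / u = r" unfolding u_def using r0 by auto
  have tb: "u * measure N {x. abs x \<ge> r} \<le> Re (CLBINT v:{-u..u}. 1 - char N v)"
    using real_distribution_tail[OF RD u0] ur by simp
  have setB: "{x::real. r \<le> \<bar>x\<bar>} \<in> sets borel"
    by (rule borel_closed) (intro closed_Collect_le continuous_intros)
  have mN: "measure N {x. abs x \<ge> r} = measure M {\<omega>\<in>space M. r \<le> \<bar>Z i t \<omega> - Z i s \<omega>\<bar>}"
    unfolding N_def using measure_distr[OF Dm setB] by (simp add: D_def Collect_conj_eq Int_commute vimage_def)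
  have cN: "char N = (\<lambda>v. complex_of_real (exp (- (t - s) * \<bar>v\<bar> powr \<alpha>)))"
    unfolding N_def D_def by (rule sf_char[OF sf st])
  define f where "f v = 1 - exp (- (t - s) * \<bar>v\<bar> powr \<alpha>)" for v :: real
  have contf: "continuous_on {-u..u} f" unfolding f_def
    by (intro continuous_intros continuous_on_powr') (use a0 in auto)
  have "(CLBINT v:{-u..u}. 1 - char N v) = (CLBINT v:{-u..u}. complex_of_real (f v))"
    unfolding cN f_def by simp
  also have "\<dots> = complex_of_real (LBINT v:{-u..u}. f v)" by (rule set_integral_complex_of_real)
  finally have re: "Re (CLBINT v:{-u..u}. 1 - char N v) = (LBINT v:{-u..u}. f v)" by simp
  have "(LBINT v:{-u..u}. f v) \<le> (LBINT v:{-u..u}. (t - s) * u powr \<alpha>)"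
  proof (rule set_integral_mono)
    show "set_integrable lborel {-u..u} f" unfolding set_integrable_def
      by (rule borel_integrable_compact[OF compact_Icc contf])
    show "set_integrable lborel {-u..u} (\<lambda>v. (t - s) * u powr \<alpha>)" unfolding set_integrable_def
      by (rule borel_integrable_compact[OF compact_Icc]) (intro continuous_intros)
    fix v :: real assume v: "v \<in> {-u..u}"
    have "1 - exp (- (t - s) * \<bar>v\<bar> powr \<alpha>) \<le> (t - s) * \<bar>v\<bar> powr \<alpha>"
      using exp_ge_add_one_self[of "- (t - s) * \<bar>v\<bar> powr \<alpha>"] by linarith
    also have "\<dots> \<le> (t - s) * u powr \<alpha>"
      using v st a0 by (intro mult_left_mono powr_mono2) auto
    finally show "f v \<le> (t - s) * u powr \<alpha>" by (simp only: f_def)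
  qed
  also have "\<dots> = 2 * u * ((t - s) * u powr \<alpha>)"
    using u0 by (subst set_integral_const) (auto simp: emeasure_lborel_Icc_eq measure_lborel_Icc)
  finally have "u * measure M {\<omega>\<in>space M. r \<le> \<bar>Z i t \<omega> - Z i s \<omega>\<bar>} \<le> u * (2 * (t - s) * u powr \<alpha>)"
    using tb re mN by (simp add: algebra_simps)
  then have "measure M {\<omega>\<in>space M. r \<le> \<bar>Z i t \<omega> - Z i s \<omega>\<bar>} \<le> 2 * (t - s) * u powr \<alpha>"
    using u0 by simp
  also have "u powr \<alpha> = 2 powr \<alpha> / r powr \<alpha>" unfolding u_def using r0 by (simp add: powr_divide)
  finally have "measure M {\<omega>\<in>space M. r \<le> \<bar>Z i t \<omega> - Z i s \<omega>\<bar>} \<le> 2 * (t - s) * (2 powr \<alpha> / r powr \<alpha>)" .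
  moreover have "2 * (t - s) * (2 powr \<alpha> / r powr \<alpha>) = 2 * 2 powr \<alpha> * (t - s) / r powr \<alpha>"
    by (simp add: ac_simps)
  ultimately show ?thesis by (rule ord_le_eq_trans)
qed

lemma stable_sym:
  assumes sf: "stable_family M \<alpha> Z" and st: "0 \<le> s" "s \<le> t"
  shows "measure M {\<omega>\<in>space M. Z i t \<omega> - Z i s \<omega> \<ge> 0} \<ge> 1/2"
    and "measure M {\<omega>\<in>space M. Z i t \<omega> - Z i s \<omega> \<le> 0} \<ge> 1/2"
proof -
  interpret prob_space M by (rule sf_prob[OF sf])
  define D where "D \<omega> = Z i t \<omega> - Z i s \<omega>" for \<omega>
  have Dm[measurable]: "D \<in> borel_measurable M" unfolding D_def using sf_meas[OF sf] by measurable
  have Dm': "(\<lambda>\<omega>. - D \<omega>) \<in> borel_measurable M" by measurable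
  define N1 where "N1 = distr M borel D"
  define N2 where "N2 = distr M borel (\<lambda>\<omega>. - D \<omega>)"
  have RD1: "real_distribution N1" unfolding N1_def using Dm by simp
  have RD2: "real_distribution N2" unfolding N2_def using Dm' by simp
  have c1: "char N1 = (\<lambda>v. complex_of_real (exp (- (t - s) * \<bar>v\<bar> powr \<alpha>)))"
    unfolding N1_def D_def by (rule sf_char[OF sf st])
  have "char N2 v = char N1 (- v)" for v
  proof -
    have "char N2 v = (CLINT \<omega>|M. iexp (v * - D \<omega>))"
      unfolding char_def N2_def by (subst integral_distr) (auto intro!: borel_measurable_continuous_onI continuous_intros)
    also have "\<dots> = (CLINT \<omega>|M. iexp (- v * D \<omega>))" by simp
    also have "\<dots> = char N1 (- v)"
      unfolding char_def N1_def by (subst integral_distr) (auto intro!: borel_measurable_continuous_onI continuous_intros)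
    finally show ?thesis .
  qed
  then have "char N2 = char N1" using c1 by (auto simp: fun_eq_iff)
  then have N12: "N1 = N2" using Levy_uniqueness[OF RD1 RD2] by simp
  have setP: "{x::real. 0 \<le> x} \<in> sets borel" by (rule borel_closed) (intro closed_Collect_le continuous_intros)
  have m1: "measure N1 {x. 0 \<le> x} = measure M {\<omega>\<in>space M. Z i t \<omega> - Z i s \<omega> \<ge> 0}"
    unfolding N1_def using measure_distr[OF Dm setP] by (simp add: D_def Collect_conj_eq Int_commute vimage_def)
  have m2: "measure N2 {x. 0 \<le> x} = measure M {\<omega>\<in>space M. Z i t \<omega> - Z i s \<omega> \<le> 0}"
    unfolding N2_def using measure_distr[OF Dm' setP] by (simp add: D_def Collect_conj_eq Int_commute vimage_def)
  have eq: "measure M {\<omega>\<in>space M. Z i t \<omega> - Z i s \<omega> \<ge> 0} = measure M {\<omega>\<in>space M. Z i t \<omega> - Z i s \<omega> \<le> 0}"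
    using m1 m2 N12 by simp
  have sets: "{\<omega>\<in>space M. Z i t \<omega> - Z i s \<omega> \<ge> 0} \<in> events" "{\<omega>\<in>space M. Z i t \<omega> - Z i s \<omega> \<le> 0} \<in> events"
    using sf_meas[OF sf] by measurable
  have "1 = prob (space M)" using prob_space by simp
  also have "space M = {\<omega>\<in>space M. Z i t \<omega> - Z i s \<omega> \<ge> 0} \<union> {\<omega>\<in>space M. Z i t \<omega> - Z i s \<omega> \<le> 0}" by auto
  also have "prob \<dots> \<le> prob {\<omega>\<in>space M. Z i t \<omega> - Z i s \<omega> \<ge> 0} + prob {\<omega>\<in>space M. Z i t \<omega> - Z i s \<omega> \<le> 0}"
    by (rule measure_Un_le[OF sets])
  finally show "measure M {\<omega>\<in>space M. Z i t \<omega> - Z i s \<omega> \<ge> 0} \<ge> 1/2"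
    and "measure M {\<omega>\<in>space M. Z i t \<omega> - Z i s \<omega> \<le> 0} \<ge> 1/2" using eq by auto
qed

lemma levy_indep:
  assumes sf: "stable_family M \<alpha> Z" and inc: "incseq tt" and t0: "tt 0 = 0" and km: "k \<le> m"
    and Q: "Q \<in> sets borel"
  shows "measure M {\<omega>\<in>space M. (b < \<bar>Z i (tt k) \<omega>\<bar> \<and> (\<forall>l<k. \<bar>Z i (tt l) \<omega>\<bar> \<le> b) \<and> 0 < c * Z i (tt k) \<omega>)
             \<and> Z i (tt m) \<omega> - Z i (tt k) \<omega> \<in> Q}
       = measure M {\<omega>\<in>space M. b < \<bar>Z i (tt k) \<omega>\<bar> \<and> (\<forall>l<k. \<bar>Z i (tt l) \<omega>\<bar> \<le> b) \<and> 0 < c * Z i (tt k) \<omega>}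
         * measure M {\<omega>\<in>space M. Z i (tt m) \<omega> - Z i (tt k) \<omega> \<in> Q}"
proof -
  interpret prob_space M by (rule sf_prob[OF sf])
  define \<xi> where "\<xi> = (\<lambda>(i', l) \<omega>. Z i' (tt (Suc l)) \<omega> - Z i' (tt l) \<omega>)"
  have ind: "indep_vars (\<lambda>_. borel) \<xi> ({i} \<times> {..<m})"
    unfolding \<xi>_def by (rule sf_indep[OF sf]) (use t0 inc in auto)
  define A where "A = {i} \<times> {..<k}"
  define B where "B = {i} \<times> {k..<m}"
  have iv: "indep_var (PiM A (\<lambda>_. borel)) (\<lambda>\<omega>. restrict (\<lambda>p. \<xi> p \<omega>) A) (PiM B (\<lambda>_. borel)) (\<lambda>\<omega>. restrict (\<lambda>p. \<xi> p \<omega>) B)"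
    by (rule indep_var_restrict[OF ind]) (use km in \<open>auto simp: A_def B_def\<close>)
  define Y1 where "Y1 f = (b < \<bar>\<Sum>l'<k. f (i, l')\<bar> \<and> (\<forall>l<k. \<bar>\<Sum>l'<l. f (i, l')\<bar> \<le> b) \<and> 0 < c * (\<Sum>l'<k. (f (i, l') :: real)))"
    for f
  define Y2 where "Y2 f = (\<Sum>l\<in>{k..<m}. (f (i, l) :: real))" for f
  have sm: "(\<lambda>f. \<Sum>l'<l. (f (i, l') :: real)) \<in> borel_measurable (PiM A (\<lambda>_. borel))" if "l \<le> k" for l
    by (rule borel_measurable_sum, rule measurable_component_singleton) (use that in \<open>auto simp: A_def\<close>)
  have Y1m: "Y1 \<in> measurable (PiM A (\<lambda>_. borel)) (count_space UNIV)"
  proof -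
    have [measurable]: "(\<lambda>f. \<Sum>l'<k. (f (i, l') :: real)) \<in> borel_measurable (PiM A (\<lambda>_. borel))" by (rule sm) simp
    have pl: "Measurable.pred (PiM A (\<lambda>_. borel)) (\<lambda>f. \<bar>\<Sum>l'<l. (f (i, l') :: real)\<bar> \<le> b)" if "l < k" for l
      using sm[of l, OF less_imp_le[OF that]] by measurable
    have "Measurable.pred (PiM A (\<lambda>_. borel)) (\<lambda>f. \<forall>l<k. \<bar>\<Sum>l'<l. (f (i, l') :: real)\<bar> \<le> b)"
    proof (rule pred_intros_countable(1))
      fix l
      show "Measurable.pred (PiM A (\<lambda>_. borel)) (\<lambda>f. l < k \<longrightarrow> \<bar>\<Sum>l'<l. (f (i, l') :: real)\<bar> \<le> b)"
      proof (cases "l < k")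
        case True
        then show ?thesis using pl[OF True] by simp
      next
        case False
        then show ?thesis by simp
      qed
    qed
    then show ?thesis unfolding Y1_def by measurable
  qed
  define Y1r where "Y1r f = (if Y1 f then 1 else (0::real))" for f
  have Y1rm: "Y1r \<in> borel_measurable (PiM A (\<lambda>_. borel))"
    unfolding Y1r_def using Y1m by measurable
  have Y2m: "Y2 \<in> borel_measurable (PiM B (\<lambda>_. borel))"
    unfolding Y2_def by (rule borel_measurable_sum, rule measurable_component_singleton) (auto simp: B_def)
  have ivc: "indep_var borel (Y1r \<circ> (\<lambda>\<omega>. restrict (\<lambda>p. \<xi> p \<omega>) A)) borel (Y2 \<circ> (\<lambda>\<omega>. restrict (\<lambda>p. \<xi> p \<omega>) B))"
    by (rule indep_var_compose[OF iv Y1rm Y2m])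
  have tel: "(\<Sum>l'<l. \<xi> (i, l') \<omega>) = Z i (tt l) \<omega>" if "\<omega> \<in> space M" for l \<omega>
  proof -
    have "(\<Sum>l'<l. \<xi> (i, l') \<omega>) = (\<Sum>l'<l. Z i (tt (Suc l')) \<omega> - Z i (tt l') \<omega>)" unfolding \<xi>_def by simp
    also have "\<dots> = Z i (tt l) \<omega> - Z i (tt 0) \<omega>" by (rule sum_lessThan_telescope)
    finally show ?thesis using sf_zero[OF sf that] t0 by simp
  qed
  have e0: "(Y1 \<circ> (\<lambda>\<omega>. restrict (\<lambda>p. \<xi> p \<omega>) A)) \<omega> = (b < \<bar>Z i (tt k) \<omega>\<bar> \<and> (\<forall>l<k. \<bar>Z i (tt l) \<omega>\<bar> \<le> b) \<and> 0 < c * Z i (tt k) \<omega>)"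
    if "\<omega> \<in> space M" for \<omega>
  proof -
    have r: "(\<Sum>l'<l. restrict (\<lambda>p. \<xi> p \<omega>) A (i, l')) = Z i (tt l) \<omega>" if "l \<le> k" for l
    proof -
      have "(\<Sum>l'<l. restrict (\<lambda>p. \<xi> p \<omega>) A (i, l')) = (\<Sum>l'<l. \<xi> (i, l') \<omega>)"
        by (rule sum.cong) (use that in \<open>auto simp: A_def\<close>)
      then show ?thesis using tel[OF \<open>\<omega> \<in> space M\<close>] by simp
    qed
    show ?thesis unfolding o_def Y1_def using r by auto
  qed
  have e1: "((Y1r \<circ> (\<lambda>\<omega>. restrict (\<lambda>p. \<xi> p \<omega>) A)) \<omega> = 1) = (b < \<bar>Z i (tt k) \<omega>\<bar> \<and> (\<forall>l<k. \<bar>Z i (tt l) \<omega>\<bar> \<le> b) \<and> 0 < c * Z i (tt k) \<omega>)"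
    if "\<omega> \<in> space M" for \<omega>
    using e0[OF that] unfolding Y1r_def o_def by simp
  have e2: "(Y2 \<circ> (\<lambda>\<omega>. restrict (\<lambda>p. \<xi> p \<omega>) B)) \<omega> = Z i (tt m) \<omega> - Z i (tt k) \<omega>" for \<omega>
  proof -
    have "(Y2 \<circ> (\<lambda>\<omega>. restrict (\<lambda>p. \<xi> p \<omega>) B)) \<omega> = (\<Sum>l\<in>{k..<m}. Z i (tt (Suc l)) \<omega> - Z i (tt l) \<omega>)"
      unfolding o_def Y2_def by (rule sum.cong) (auto simp: B_def \<xi>_def)
    also have "\<dots> = Z i (tt m) \<omega> - Z i (tt k) \<omega>" by (rule sum_Suc_diff'[OF km])
    finally show ?thesis .
  qed
  have "prob ((\<lambda>x. ((Y1r \<circ> (\<lambda>\<omega>. restrict (\<lambda>p. \<xi> p \<omega>) A)) x, (Y2 \<circ> (\<lambda>\<omega>. restrict (\<lambda>p. \<xi> p \<omega>) B)) x)) -` ({1} \<times> Q) \<inter> space M)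
     = prob ((Y1r \<circ> (\<lambda>\<omega>. restrict (\<lambda>p. \<xi> p \<omega>) A)) -` {1} \<inter> space M) * prob ((Y2 \<circ> (\<lambda>\<omega>. restrict (\<lambda>p. \<xi> p \<omega>) B)) -` Q \<inter> space M)"
    by (rule indep_varD[OF ivc]) (use Q in auto)
  moreover have "(\<lambda>x. ((Y1r \<circ> (\<lambda>\<omega>. restrict (\<lambda>p. \<xi> p \<omega>) A)) x, (Y2 \<circ> (\<lambda>\<omega>. restrict (\<lambda>p. \<xi> p \<omega>) B)) x)) -` ({1} \<times> Q) \<inter> space M
     = {\<omega>\<in>space M. (b < \<bar>Z i (tt k) \<omega>\<bar> \<and> (\<forall>l<k. \<bar>Z i (tt l) \<omega>\<bar> \<le> b) \<and> 0 < c * Z i (tt k) \<omega>)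
             \<and> Z i (tt m) \<omega> - Z i (tt k) \<omega> \<in> Q}"
    using e1 e2 by auto
  moreover have "(Y1r \<circ> (\<lambda>\<omega>. restrict (\<lambda>p. \<xi> p \<omega>) A)) -` {1} \<inter> space M
     = {\<omega>\<in>space M. b < \<bar>Z i (tt k) \<omega>\<bar> \<and> (\<forall>l<k. \<bar>Z i (tt l) \<omega>\<bar> \<le> b) \<and> 0 < c * Z i (tt k) \<omega>}"
    using e1 by auto
  moreover have "(Y2 \<circ> (\<lambda>\<omega>. restrict (\<lambda>p. \<xi> p \<omega>) B)) -` Q \<inter> space M
     = {\<omega>\<in>space M. Z i (tt m) \<omega> - Z i (tt k) \<omega> \<in> Q}"
    using e2 by auto
  ultimately show ?thesis by simp
qed

lemma levy_max:
  assumes sf: "stable_family M \<alpha> Z" and inc: "incseq tt" and t0: "tt 0 = 0" and b0: "b \<ge> 0"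
  shows "measure M {\<omega>\<in>space M. \<exists>k\<le>m. b < \<bar>Z i (tt k) \<omega>\<bar>} \<le> 2 * measure M {\<omega>\<in>space M. b < \<bar>Z i (tt m) \<omega>\<bar>}"
proof -
  interpret prob_space M by (rule sf_prob[OF sf])
  have [measurable]: "Z i t \<in> borel_measurable M" for t using sf_meas[OF sf] by blast
  define E where "E k = {\<omega>\<in>space M. b < \<bar>Z i (tt k) \<omega>\<bar> \<and> (\<forall>l<k. \<bar>Z i (tt l) \<omega>\<bar> \<le> b)}" for k
  define Ec where "Ec c k = {\<omega>\<in>space M. b < \<bar>Z i (tt k) \<omega>\<bar> \<and> (\<forall>l<k. \<bar>Z i (tt l) \<omega>\<bar> \<le> b) \<and> 0 < c * Z i (tt k) \<omega>}" for c :: real and k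
  define Fc where "Fc c Q k = {\<omega>\<in>space M. (b < \<bar>Z i (tt k) \<omega>\<bar> \<and> (\<forall>l<k. \<bar>Z i (tt l) \<omega>\<bar> \<le> b) \<and> 0 < c * Z i (tt k) \<omega>)
             \<and> Z i (tt m) \<omega> - Z i (tt k) \<omega> \<in> Q}" for c :: real and Q and k
  define Qp where "Qp = {x::real. 0 \<le> x}"
  define Qn where "Qn = {x::real. x \<le> 0}"
  have Qs: "Qp \<in> sets borel" "Qn \<in> sets borel" unfolding Qp_def Qn_def
    by (rule borel_closed, intro closed_Collect_le continuous_intros)+
  have Esets: "E k \<in> events" for k unfolding E_def by measurable
  have Ecsets: "Ec c k \<in> events" for c k unfolding Ec_def by measurable
  have Fcsets: "Fc c Q k \<in> events" if "Q \<in> sets borel" for c Q k unfolding Fc_def using that by measurable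
  have step: "prob (Ec c k) \<le> 2 * prob (Fc c Q k)"
    if km: "k \<le> m" and Q: "Q \<in> sets borel" and half: "prob {\<omega>\<in>space M. Z i (tt m) \<omega> - Z i (tt k) \<omega> \<in> Q} \<ge> 1/2" for c Q k
  proof -
    have "prob (Fc c Q k) = prob (Ec c k) * prob {\<omega>\<in>space M. Z i (tt m) \<omega> - Z i (tt k) \<omega> \<in> Q}"
      unfolding Fc_def Ec_def by (rule levy_indep[OF sf inc t0 km Q])
    also have "\<dots> \<ge> prob (Ec c k) * (1/2)" using half by (intro mult_left_mono) auto
    finally show ?thesis by simp
  qed
  have halfp: "prob {\<omega>\<in>space M. Z i (tt m) \<omega> - Z i (tt k) \<omega> \<in> Qp} \<ge> 1/2" if "k \<le> m" for k
    using stable_sym(1)[OF sf, of "tt k" "tt m" i] that inc t0 unfolding Qp_def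
    by (auto simp: incseq_def) (metis incseq_def inc le0)
  have halfn: "prob {\<omega>\<in>space M. Z i (tt m) \<omega> - Z i (tt k) \<omega> \<in> Qn} \<ge> 1/2" if "k \<le> m" for k
    using stable_sym(2)[OF sf, of "tt k" "tt m" i] that inc t0 unfolding Qn_def
    by (auto simp: incseq_def) (metis incseq_def inc le0)
  have Esplit: "prob (E k) = prob (Ec 1 k) + prob (Ec (-1) k)" for k
  proof -
    have "E k = Ec 1 k \<union> Ec (-1) k" unfolding E_def Ec_def using b0 by auto
    moreover have "Ec 1 k \<inter> Ec (-1) k = {}" unfolding Ec_def by auto
    ultimately show ?thesis using finite_measure_Union[OF Ecsets Ecsets] by simp
  qed
  define G where "G k = Fc 1 Qp k \<union> Fc (-1) Qn k" for k
  have Gsets: "G k \<in> events" for k unfolding G_def using Fcsets Qs by auto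
  have Gsplit: "prob (G k) = prob (Fc 1 Qp k) + prob (Fc (-1) Qn k)" for k
  proof -
    have "Fc 1 Qp k \<inter> Fc (-1) Qn k = {}" unfolding Fc_def by auto
    then show ?thesis unfolding G_def using finite_measure_Union[OF Fcsets[OF Qs(1)] Fcsets[OF Qs(2)]] by simp
  qed
  have EG: "prob (E k) \<le> 2 * prob (G k)" if "k \<le> m" for k
    using step[OF that Qs(1) halfp[OF that], of 1] step[OF that Qs(2) halfn[OF that], of "-1"] Esplit[of k] Gsplit[of k]
    by simp
  have disjE: "disjoint_family_on E {..m}"
    unfolding disjoint_family_on_def E_def by (auto simp: not_less_iff_gr_or_eq) (meson linorder_neqE_nat not_le)+
  have GE: "G k \<subseteq> E k" for k unfolding G_def Fc_def E_def by auto
  have disjG: "disjoint_family_on G {..m}"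
    using disjE GE unfolding disjoint_family_on_def by blast
  have UE: "{\<omega>\<in>space M. \<exists>k\<le>m. b < \<bar>Z i (tt k) \<omega>\<bar>} = (\<Union>k\<in>{..m}. E k)"
  proof
    show "{\<omega>\<in>space M. \<exists>k\<le>m. b < \<bar>Z i (tt k) \<omega>\<bar>} \<subseteq> (\<Union>k\<in>{..m}. E k)"
    proof
      fix \<omega> assume "\<omega> \<in> {\<omega>\<in>space M. \<exists>k\<le>m. b < \<bar>Z i (tt k) \<omega>\<bar>}"
      then obtain k where k: "\<omega> \<in> space M" "k \<le> m" "b < \<bar>Z i (tt k) \<omega>\<bar>" by auto
      define k0 where "k0 = (LEAST k. b < \<bar>Z i (tt k) \<omega>\<bar>)"
      have "b < \<bar>Z i (tt k0) \<omega>\<bar>" unfolding k0_def by (rule LeastI[of _ k]) (rule k(3))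
      moreover have "k0 \<le> k" unfolding k0_def by (rule Least_le) (rule k(3))
      moreover have "\<forall>l<k0. \<bar>Z i (tt l) \<omega>\<bar> \<le> b" unfolding k0_def using not_less_Least by fastforce
      ultimately show "\<omega> \<in> (\<Union>k\<in>{..m}. E k)" unfolding E_def using k by auto
    qed
    show "(\<Union>k\<in>{..m}. E k) \<subseteq> {\<omega>\<in>space M. \<exists>k\<le>m. b < \<bar>Z i (tt k) \<omega>\<bar>}"
      unfolding E_def by auto
  qed
  have UG: "(\<Union>k\<in>{..m}. G k) \<subseteq> {\<omega>\<in>space M. b < \<bar>Z i (tt m) \<omega>\<bar>}"
    unfolding G_def Fc_def Qp_def Qn_def by auto
  have "prob {\<omega>\<in>space M. \<exists>k\<le>m. b < \<bar>Z i (tt k) \<omega>\<bar>} = (\<Sum>k\<in>{..m}. prob (E k))"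
    unfolding UE by (rule finite_measure_finite_Union) (use Esets disjE in auto)
  also have "\<dots> \<le> (\<Sum>k\<in>{..m}. 2 * prob (G k))" by (rule sum_mono) (rule EG, simp)
  also have "\<dots> = 2 * prob (\<Union>k\<in>{..m}. G k)"
    by (subst finite_measure_finite_Union) (use Gsets disjG in \<open>auto simp: sum_distrib_left\<close>)
  also have "\<dots> \<le> 2 * prob {\<omega>\<in>space M. b < \<bar>Z i (tt m) \<omega>\<bar>}"
    using UG by (intro mult_left_mono finite_measure_mono) auto
  finally show ?thesis .
qed

definition dmax :: "('i \<Rightarrow> real \<Rightarrow> 'w \<Rightarrow> real) \<Rightarrow> 'i \<Rightarrow> real \<Rightarrow> nat \<Rightarrow> 'w \<Rightarrow> real" where
  "dmax Z i T n \<omega> = Max ((\<lambda>k. \<bar>Z i (T * real k / 2 ^ n) \<omega>\<bar>) ` {..2 ^ n})"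

lemma dyad_bound:
  fixes y :: real assumes y0: "y \<ge> 0"
  shows "ennreal y \<le> 1 + (\<Sum>k. ennreal (2 ^ Suc k) * indicator {x::real. 2 ^ k < x} y)"
proof (cases "y \<le> 1")
  case True
  then have "ennreal y \<le> 1" by (simp add: ennreal_le_1)
  then show ?thesis by (rule order_trans) simp
next
  case False
  then have y1: "y > 1" by simp
  obtain n where "y < 2 ^ n" using real_arch_pow[of 2 y] by auto
  then have ex: "\<exists>n. y \<le> (2::real) ^ n" by (auto intro: less_imp_le)
  define m0 where "m0 = (LEAST n. y \<le> (2::real) ^ n)"
  have m0a: "y \<le> 2 ^ m0" unfolding m0_def using ex by (rule LeastI_ex)
  have m0pos: "m0 > 0" using m0a y1 by (cases m0) auto
  define m where "m = m0 - 1"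
  have mSuc: "m0 = Suc m" unfolding m_def using m0pos by simp
  have "\<not> y \<le> 2 ^ m" unfolding m0_def[symmetric, THEN sym] using not_less_Least[of m "\<lambda>n. y \<le> (2::real) ^ n"]
    by (simp add: m0_def[symmetric] mSuc)
  then have lt: "2 ^ m < y" by simp
  define F where "F k = ennreal (2 ^ Suc k) * indicator {x::real. 2 ^ k < x} y" for k
  have "ennreal y \<le> ennreal (2 ^ Suc m)" using m0a mSuc by (simp add: ennreal_leI)
  also have "\<dots> = F m" unfolding F_def using lt by simp
  also have "\<dots> = sum F {m}" by simp
  also have "\<dots> \<le> suminf F"
    by (rule sum_le_suminf) (auto intro: summableI)
  also have "\<dots> \<le> 1 + suminf F" by simp
  finally show ?thesis unfolding F_def .
qed

lemma dmax_meas: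
  assumes "\<And>t. Z i t \<in> borel_measurable M"
  shows "dmax Z i T n \<in> borel_measurable M"
  unfolding dmax_def using assms by measurable

lemma dmax_ge: "k \<le> 2 ^ n \<Longrightarrow> \<bar>Z i (T * real k / 2 ^ n) \<omega>\<bar> \<le> dmax Z i T n \<omega>"
  unfolding dmax_def by (rule Max_ge) auto

lemma dmax_nonneg: "dmax Z i T n \<omega> \<ge> 0"
  by (rule order_trans[OF abs_ge_zero dmax_ge[of 0]]) simp

lemma dmax_mono: "dmax Z i T n \<omega> \<le> dmax Z i T (Suc n) \<omega>"
  unfolding dmax_def
proof (rule Max_mono)
  show "(\<lambda>k. \<bar>Z i (T * real k / 2 ^ n) \<omega>\<bar>) ` {..2 ^ n} \<subseteq> (\<lambda>k. \<bar>Z i (T * real k / 2 ^ Suc n) \<omega>\<bar>) ` {..2 ^ Suc n}"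
  proof
    fix v assume "v \<in> (\<lambda>k. \<bar>Z i (T * real k / 2 ^ n) \<omega>\<bar>) ` {..2 ^ n}"
    then obtain k where k: "k \<le> 2 ^ n" "v = \<bar>Z i (T * real k / 2 ^ n) \<omega>\<bar>" by auto
    have "T * real (2 * k) / 2 ^ Suc n = T * real k / 2 ^ n" by simp
    moreover have "2 * k \<le> 2 ^ Suc n" using k(1) by simp
    ultimately show "v \<in> (\<lambda>k. \<bar>Z i (T * real k / 2 ^ Suc n) \<omega>\<bar>) ` {..2 ^ Suc n}"
      using k(2) by (metis (no_types, lifting) atMost_iff image_eqI)
  qed
qed auto

lemma dmax_mono': "m \<le> n \<Longrightarrow> dmax Z i T m \<omega> \<le> dmax Z i T n \<omega>"
  by (rule lift_Suc_mono_le[of "\<lambda>n. dmax Z i T n \<omega>"]) (rule dmax_mono)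

lemma dmax_tail:
  assumes sf: "stable_family M \<alpha> Z" and a0: "\<alpha> > 0" and T0: "T \<ge> 0" and b0: "b > 0"
  shows "measure M {\<omega>\<in>space M. b < dmax Z i T n \<omega>} \<le> 4 * 2 powr \<alpha> * T / b powr \<alpha>"
proof -
  interpret prob_space M by (rule sf_prob[OF sf])
  have [measurable]: "Z i t \<in> borel_measurable M" for t using sf_meas[OF sf] by blast
  define tt where "tt k = T * real k / 2 ^ n" for k
  have inc: "incseq tt" unfolding tt_def incseq_def using T0 by (auto intro!: divide_right_mono mult_left_mono)
  have t0: "tt 0 = 0" unfolding tt_def by simp
  have tT: "tt (2 ^ n) = T" unfolding tt_def by simp
  have "{\<omega>\<in>space M. b < dmax Z i T n \<omega>} = {\<omega>\<in>space M. \<exists>k\<le>2 ^ n. b < \<bar>Z i (tt k) \<omega>\<bar>}"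
    unfolding dmax_def tt_def by (subst Max_gr_iff) auto
  then have "prob {\<omega>\<in>space M. b < dmax Z i T n \<omega>} \<le> 2 * prob {\<omega>\<in>space M. b < \<bar>Z i (tt (2 ^ n)) \<omega>\<bar>}"
    using levy_max[OF sf inc t0, of b "2 ^ n" i] b0 by simp
  also have "prob {\<omega>\<in>space M. b < \<bar>Z i (tt (2 ^ n)) \<omega>\<bar>} \<le> prob {\<omega>\<in>space M. b \<le> \<bar>Z i T \<omega> - Z i 0 \<omega>\<bar>}"
    using sf_zero[OF sf] tT by (intro finite_measure_mono) auto
  also have "\<dots> \<le> 2 * 2 powr \<alpha> * (T - 0) / b powr \<alpha>"
    by (rule stable_tail[OF sf a0 _ T0 b0]) simp
  finally show ?thesis by simp
qed

lemma geom_identity: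
  fixes \<alpha> T :: real and k :: nat
  shows "2 ^ Suc k * (4 * 2 powr \<alpha> * T / (2 ^ k) powr \<alpha>) = 8 * 2 powr \<alpha> * T * (2 / 2 powr \<alpha>) ^ k"
proof -
  have "(2::real) ^ k = 2 powr real k" by (simp add: powr_realpow)
  then have "((2::real) ^ k) powr \<alpha> = 2 powr (real k * \<alpha>)" by (simp add: powr_powr)
  also have "\<dots> = (2 powr \<alpha>) powr real k" by (simp add: powr_powr mult.commute)
  also have "\<dots> = (2 powr \<alpha>) ^ k" by (simp add: powr_realpow)
  finally have e: "((2::real) ^ k) powr \<alpha> = (2 powr \<alpha>) ^ k" .
  show ?thesis unfolding e by (simp add: power_divide field_simps)
qed

lemma noise_sup:
  assumes sf: "stable_family M \<alpha> Z" and a1: "\<alpha> > 1" and T0: "T \<ge> 0"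
  shows "(\<integral>\<^sup>+\<omega>. (SUP n. ennreal (dmax Z i T n \<omega>)) \<partial>M) \<le> ennreal (1 + 8 * 2 powr \<alpha> * T / (1 - 2 / 2 powr \<alpha>))"
proof -
  interpret prob_space M by (rule sf_prob[OF sf])
  have [measurable]: "Z i t \<in> borel_measurable M" for t using sf_meas[OF sf] by blast
  have dm[measurable]: "dmax Z i T n \<in> borel_measurable M" for n by (rule dmax_meas) simp
  define r where "r = 2 / 2 powr \<alpha>"
  have p2: "2 powr \<alpha> > 2" using a1 powr_less_mono[OF a1, of 2] by simp
  have r0: "0 \<le> r" "r < 1" unfolding r_def using p2 by auto
  define B where "B = 8 * 2 powr \<alpha> * T / (1 - r)"
  have each: "(\<integral>\<^sup>+\<omega>. ennreal (dmax Z i T n \<omega>) \<partial>M) \<le> ennreal (1 + B)" for n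
  proof -
    define F where "F k \<omega> = ennreal (2 ^ Suc k) * indicator {\<omega>\<in>space M. 2 ^ k < dmax Z i T n \<omega>} \<omega>" for k \<omega>
    have Fm[measurable]: "F k \<in> borel_measurable M" for k unfolding F_def by measurable
    have "(\<integral>\<^sup>+\<omega>. ennreal (dmax Z i T n \<omega>) \<partial>M) \<le> (\<integral>\<^sup>+\<omega>. 1 + (\<Sum>k. F k \<omega>) \<partial>M)"
    proof (rule nn_integral_mono)
      fix \<omega> assume "\<omega> \<in> space M"
      then have "(\<Sum>k. ennreal (2 ^ Suc k) * indicator {x::real. 2 ^ k < x} (dmax Z i T n \<omega>)) = (\<Sum>k. F k \<omega>)"
        unfolding F_def by (simp add: indicator_def)
      then show "ennreal (dmax Z i T n \<omega>) \<le> 1 + (\<Sum>k. F k \<omega>)"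
        using dyad_bound[OF dmax_nonneg[of Z i T n \<omega>]] by simp
    qed
    also have "\<dots> = (\<integral>\<^sup>+\<omega>. 1 \<partial>M) + (\<integral>\<^sup>+\<omega>. (\<Sum>k. F k \<omega>) \<partial>M)"
      by (rule nn_integral_add) auto
    also have "(\<integral>\<^sup>+\<omega>. (\<Sum>k. F k \<omega>) \<partial>M) = (\<Sum>k. (\<integral>\<^sup>+\<omega>. F k \<omega> \<partial>M))"
      by (rule nn_integral_suminf) simp
    also have "(\<integral>\<^sup>+\<omega>. 1 \<partial>M) = 1" using prob_space by (simp add: emeasure_eq_measure)
    also have "(\<Sum>k. (\<integral>\<^sup>+\<omega>. F k \<omega> \<partial>M)) \<le> (\<Sum>k. ennreal (8 * 2 powr \<alpha> * T * r ^ k))"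
    proof (rule suminf_le)
      fix k
      have "(\<integral>\<^sup>+\<omega>. F k \<omega> \<partial>M) = ennreal (2 ^ Suc k) * emeasure M {\<omega>\<in>space M. 2 ^ k < dmax Z i T n \<omega>}"
        unfolding F_def by (rule nn_integral_cmult_indicator) measurable
      also have "\<dots> = ennreal (2 ^ Suc k) * ennreal (prob {\<omega>\<in>space M. 2 ^ k < dmax Z i T n \<omega>})"
        by (simp add: emeasure_eq_measure)
      also have "\<dots> \<le> ennreal (2 ^ Suc k) * ennreal (4 * 2 powr \<alpha> * T / (2 ^ k) powr \<alpha>)"
        using dmax_tail[OF sf _ T0, of "2 ^ k" i n] a1 by (intro mult_left_mono ennreal_leI) auto
      also have "\<dots> = ennreal (2 ^ Suc k * (4 * 2 powr \<alpha> * T / (2 ^ k) powr \<alpha>))"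
        by (simp add: ennreal_mult'[symmetric])
      also have "\<dots> = ennreal (8 * 2 powr \<alpha> * T * r ^ k)" unfolding r_def by (simp only: geom_identity)
      finally show "(\<integral>\<^sup>+\<omega>. F k \<omega> \<partial>M) \<le> ennreal (8 * 2 powr \<alpha> * T * r ^ k)" .
    qed auto
    also have "(\<Sum>k. ennreal (8 * 2 powr \<alpha> * T * r ^ k)) = ennreal (\<Sum>k. 8 * 2 powr \<alpha> * T * r ^ k)"
      using r0 T0 by (intro suminf_ennreal2) (auto intro!: summable_mult summable_geometric)
    also have "(\<Sum>k. 8 * 2 powr \<alpha> * T * r ^ k) = B"
      unfolding B_def using r0 by (simp add: suminf_mult suminf_geometric summable_geometric divide_simps)
    moreover have "B \<ge> 0" unfolding B_def using r0 T0 by simp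
    ultimately show ?thesis by (simp add: ennreal_plus)
  qed
  have "(\<integral>\<^sup>+\<omega>. (SUP n. ennreal (dmax Z i T n \<omega>)) \<partial>M) = (SUP n. (\<integral>\<^sup>+\<omega>. ennreal (dmax Z i T n \<omega>) \<partial>M))"
    by (rule nn_integral_monotone_convergence_SUP) (auto simp: incseq_def le_fun_def intro!: ennreal_leI dmax_mono')
  also have "\<dots> \<le> ennreal (1 + B)" by (rule SUP_least) (rule each)
  finally show ?thesis unfolding B_def r_def .
qed

primrec pw :: "'i set \<Rightarrow> ('i \<Rightarrow> 'i \<Rightarrow> real) \<Rightarrow> nat \<Rightarrow> ('i \<Rightarrow> real) \<Rightarrow> 'i \<Rightarrow> real" where
  "pw G c 0 B = B"
| "pw G c (Suc n) B = (\<lambda>i. \<Sum>j\<in>G. c j i * pw G c n B j)"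

primrec pwe :: "'i set \<Rightarrow> ('i \<Rightarrow> 'i \<Rightarrow> real) \<Rightarrow> nat \<Rightarrow> ('i \<Rightarrow> ennreal) \<Rightarrow> 'i \<Rightarrow> ennreal" where
  "pwe G c 0 B = B"
| "pwe G c (Suc n) B = (\<lambda>i. \<Sum>j\<in>G. ennreal (c j i) * pwe G c n B j)"

lemma pw_nonneg:
  assumes "\<And>j i. c j i \<ge> 0" "\<And>j. B j \<ge> 0"
  shows "pw G c n B i \<ge> 0"
  using assms by (induction n arbitrary: i) (auto intro!: sum_nonneg mult_nonneg_nonneg)

lemma pw_bound:
  assumes c0: "\<And>j i. c j i \<ge> 0" and B0: "\<And>j. B j \<ge> 0" and Bb: "\<And>j. B j \<le> Bm"
    and cs: "\<And>i. (\<Sum>j\<in>G. c j i) \<le> q" and q0: "q \<ge> 0"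
  shows "pw G c n B i \<le> q ^ n * Bm"
proof (induction n arbitrary: i)
  case 0 then show ?case using Bb by simp
next
  case (Suc n)
  have "pw G c (Suc n) B i = (\<Sum>j\<in>G. c j i * pw G c n B j)" by simp
  also have "\<dots> \<le> (\<Sum>j\<in>G. c j i * (q ^ n * Bm))"
    by (intro sum_mono mult_left_mono Suc c0)
  also have "\<dots> = (\<Sum>j\<in>G. c j i) * (q ^ n * Bm)" by (simp add: sum_distrib_right)
  also have "\<dots> \<le> q * (q ^ n * Bm)"
  proof (rule mult_right_mono[OF cs])
    have "0 \<le> B i" by (rule B0)
    also have "\<dots> \<le> Bm" by (rule Bb)
    finally show "0 \<le> q ^ n * Bm" using q0 by simp
  qed
  also have "\<dots> = q ^ Suc n * Bm" by simp
  finally show ?case .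
qed

lemma pw_summable:
  assumes c0: "\<And>j i. c j i \<ge> 0" and B0: "\<And>j. B j \<ge> 0" and Bb: "\<And>j. B j \<le> Bm"
    and cs: "\<And>i. (\<Sum>j\<in>G. c j i) \<le> q" and q0: "q \<ge> 0" and q1: "q < 1"
  shows "summable (\<lambda>n. pw G c n B i)"
proof (rule summable_comparison_test')
  show "summable (\<lambda>n. q ^ n * Bm)" using q0 q1 by (intro summable_mult2 summable_geometric) simp
  fix n
  have "pw G c n B i \<ge> 0" by (rule pw_nonneg[of c B]) (auto intro: c0 B0)
  moreover have "pw G c n B i \<le> q ^ n * Bm" by (rule pw_bound[of c B Bm G q]) (auto intro: c0 B0 Bb cs q0)
  ultimately show "norm (pw G c n B i) \<le> q ^ n * Bm" by simp
qed

lemma pw_fixpoint: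
  assumes fin: "finite G" and c0: "\<And>j i. c j i \<ge> 0" and B0: "\<And>j. B j \<ge> 0" and Bb: "\<And>j. B j \<le> Bm"
    and cs: "\<And>i. (\<Sum>j\<in>G. c j i) \<le> q" and q0: "q \<ge> 0" and q1: "q < 1"
  shows "(\<Sum>j\<in>G. c j i * (\<Sum>n. pw G c n B j)) = (\<Sum>n. pw G c n B i) - B i"
proof -
  have sm: "summable (\<lambda>n. pw G c n B j)" for j by (rule pw_summable[OF c0 B0 Bb cs q0 q1])
  have "(\<Sum>j\<in>G. c j i * (\<Sum>n. pw G c n B j)) = (\<Sum>j\<in>G. (\<Sum>n. c j i * pw G c n B j))"
    using sm by (simp add: suminf_mult)
  also have "\<dots> = (\<Sum>n. \<Sum>j\<in>G. c j i * pw G c n B j)"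
    by (rule suminf_sum[symmetric]) (use sm in \<open>auto intro: summable_mult\<close>)
  also have "\<dots> = (\<Sum>n. pw G c (Suc n) B i)" by simp
  also have "\<dots> = (\<Sum>n. pw G c n B i) - pw G c 0 B i"
    by (rule suminf_split_head[OF sm])
  finally show ?thesis by simp
qed

lemma pw_ge_B:
  assumes c0: "\<And>j i. c j i \<ge> 0" and B0: "\<And>j. B j \<ge> 0" and Bb: "\<And>j. B j \<le> Bm"
    and cs: "\<And>i. (\<Sum>j\<in>G. c j i) \<le> q" and q0: "q \<ge> 0" and q1: "q < 1"
  shows "B i \<le> (\<Sum>n. pw G c n B i)"
proof -
  have "(\<Sum>n\<in>{0}. pw G c n B i) \<le> (\<Sum>n. pw G c n B i)"
    by (rule sum_le_suminf[OF pw_summable[OF c0 B0 Bb cs q0 q1]]) (auto intro: pw_nonneg[of c B] c0 B0)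
  then show ?thesis by simp
qed

lemma pwe_ennreal:
  assumes c0: "\<And>j i. c j i \<ge> 0" and B0: "\<And>j. B j \<ge> 0"
  shows "pwe G c n (\<lambda>j. ennreal (B j)) i = ennreal (pw G c n B i)"
proof (induction n arbitrary: i)
  case 0 then show ?case by simp
next
  case (Suc n)
  have pn: "\<And>j. pw G c n B j \<ge> 0" by (rule pw_nonneg[of c B]) (auto intro: c0 B0)
  have "pwe G c (Suc n) (\<lambda>j. ennreal (B j)) i = (\<Sum>j\<in>G. ennreal (c j i) * ennreal (pw G c n B j))"
    using Suc by simp
  also have "\<dots> = (\<Sum>j\<in>G. ennreal (c j i * pw G c n B j))"
    using c0 pn by (simp add: ennreal_mult)
  also have "\<dots> = ennreal (\<Sum>j\<in>G. c j i * pw G c n B j)"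
    using c0 pn by (intro sum_ennreal) auto
  finally show ?case by simp
qed

lemma pwe_mono:
  assumes "\<And>j. B j \<le> B' j"
  shows "pwe G c n B i \<le> pwe G c n B' i"
  using assms by (induction n arbitrary: i) (auto intro!: sum_mono mult_left_mono)

lemma pwe_weight:
  assumes c0: "\<And>j i. c j i \<ge> 0" and W0: "\<And>j. W j \<ge> 0"
    and cw: "\<And>i. (\<Sum>j\<in>G. c j i * W j) \<le> q * W i" and q0: "q \<ge> 0"
  shows "pwe G c n (\<lambda>j. ennreal (W j)) i \<le> ennreal (q ^ n * W i)"
proof (induction n arbitrary: i)
  case 0 then show ?case by simp
next
  case (Suc n)
  have "pwe G c (Suc n) (\<lambda>j. ennreal (W j)) i \<le> (\<Sum>j\<in>G. ennreal (c j i) * ennreal (q ^ n * W j))"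
    using Suc by (auto intro!: sum_mono mult_left_mono)
  also have "\<dots> = ennreal (\<Sum>j\<in>G. c j i * (q ^ n * W j))"
    using c0 W0 q0 by (subst sum_ennreal[symmetric]) (auto simp: ennreal_mult)
  also have "(\<Sum>j\<in>G. c j i * (q ^ n * W j)) = q ^ n * (\<Sum>j\<in>G. c j i * W j)"
    by (simp add: sum_distrib_left algebra_simps)
  also have "\<dots> \<le> q ^ n * (q * W i)" using cw q0 by (intro mult_left_mono) auto
  also have "\<dots> = q ^ Suc n * W i" by simp
  finally show ?case by (simp add: ennreal_leI)
qed

lemma pwe_meas:
  assumes "\<And>j. (\<lambda>\<omega>. B j \<omega>) \<in> borel_measurable M"
  shows "(\<lambda>\<omega>. pwe G c n (\<lambda>j. B j \<omega>) i) \<in> borel_measurable M"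
  using assms by (induction n arbitrary: i) auto

lemma pwe_integral:
  assumes fin: "finite G" and m: "\<And>j. (\<lambda>\<omega>. B j \<omega>) \<in> borel_measurable M"
  shows "(\<integral>\<^sup>+\<omega>. pwe G c n (\<lambda>j. B j \<omega>) i \<partial>M) = pwe G c n (\<lambda>j. \<integral>\<^sup>+\<omega>. B j \<omega> \<partial>M) i"
proof (induction n arbitrary: i)
  case 0 then show ?case by simp
next
  case (Suc n)
  have [measurable]: "\<And>n i. (\<lambda>\<omega>. pwe G c n (\<lambda>j. B j \<omega>) i) \<in> borel_measurable M" by (rule pwe_meas[OF m])
  have "(\<integral>\<^sup>+\<omega>. pwe G c (Suc n) (\<lambda>j. B j \<omega>) i \<partial>M) = (\<integral>\<^sup>+\<omega>. (\<Sum>j\<in>G. ennreal (c j i) * pwe G c n (\<lambda>j. B j \<omega>) j) \<partial>M)"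
    by simp
  also have "\<dots> = (\<Sum>j\<in>G. \<integral>\<^sup>+\<omega>. ennreal (c j i) * pwe G c n (\<lambda>j. B j \<omega>) j \<partial>M)"
    by (rule nn_integral_sum) measurable
  also have "\<dots> = (\<Sum>j\<in>G. ennreal (c j i) * \<integral>\<^sup>+\<omega>. pwe G c n (\<lambda>j. B j \<omega>) j \<partial>M)"
    by (rule sum.cong) (auto intro!: nn_integral_cmult)
  also have "\<dots> = pwe G c (Suc n) (\<lambda>j. \<integral>\<^sup>+\<omega>. B j \<omega> \<partial>M) i" using Suc by simp
  finally show ?case .
qed

lemma path_bound:
  fixes f :: "real \<Rightarrow> real"
  assumes T0: "T \<ge> 0" and rc: "\<And>t. t \<ge> 0 \<Longrightarrow> continuous (at_right t) f"
    and dm: "\<And>n k. k \<le> 2 ^ n \<Longrightarrow> \<bar>f (T * real k / 2 ^ n)\<bar> \<le> s"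
    and t: "t \<in> {0..T}"
  shows "\<bar>f t\<bar> \<le> s"
proof (cases "t = T")
  case True
  then show ?thesis using dm[of 1 0] by simp
next
  case False
  then have tT: "t < T" and t0: "t \<ge> 0" using t by auto
  then have Tp: "T > 0" by simp
  define y where "y n = 2 ^ n * t / T" for n :: nat
  have y0: "y n \<ge> 0" for n unfolding y_def using t0 Tp by simp
  define kn where "kn n = nat \<lfloor>y n\<rfloor> + 1" for n
  define tn where "tn n = T * real (kn n) / 2 ^ n" for n
  have kreal: "real (kn n) = of_int \<lfloor>y n\<rfloor> + 1" for n unfolding kn_def using y0[of n] by simp
  have tn_gt: "tn n > t" for n
  proof -
    have "y n < real (kn n)" unfolding kreal by linarith
    then have "T * y n / 2 ^ n < T * real (kn n) / 2 ^ n" using Tp by (intro divide_strict_right_mono mult_strict_left_mono) auto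
    moreover have "T * y n / 2 ^ n = t" unfolding y_def using Tp by simp
    ultimately show ?thesis unfolding tn_def by simp
  qed
  have tn_le: "tn n \<le> t + T / 2 ^ n" for n
  proof -
    have "real (kn n) \<le> y n + 1" unfolding kreal by linarith
    then have "T * real (kn n) / 2 ^ n \<le> T * (y n + 1) / 2 ^ n" using Tp by (intro divide_right_mono mult_left_mono) auto
    also have "\<dots> = t + T / 2 ^ n" unfolding y_def using Tp by (simp add: field_simps)
    finally show ?thesis unfolding tn_def .
  qed
  have kn_le: "kn n \<le> 2 ^ n" for n
  proof -
    have "y n < 2 ^ n" unfolding y_def using tT Tp by (simp add: field_simps)
    then have "\<lfloor>y n\<rfloor> < 2 ^ n" by (simp add: floor_less_iff)
    then have "nat \<lfloor>y n\<rfloor> < 2 ^ n" using y0[of n] by (simp add: nat_less_iff)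
    then show ?thesis unfolding kn_def by (metis Suc_eq_plus1 Suc_leI)
  qed
  have lim0: "(\<lambda>n. T / 2 ^ n) \<longlonglongrightarrow> 0"
    by (intro tendsto_divide_0[OF tendsto_const] filterlim_realpow_sequentially_gt1) simp
  have tn_lim: "tn \<longlonglongrightarrow> t"
  proof (rule tendsto_sandwich[of "\<lambda>n. t" _ _ "\<lambda>n. t + T / 2 ^ n"])
    show "\<forall>\<^sub>F n in sequentially. t \<le> tn n" using tn_gt by (intro always_eventually) (auto intro: less_imp_le)
    show "\<forall>\<^sub>F n in sequentially. tn n \<le> t + T / 2 ^ n" using tn_le by auto
    show "(\<lambda>n. t + T / 2 ^ n) \<longlonglongrightarrow> t" using tendsto_add[OF tendsto_const lim0, of t] by simp
  qed simp
  have fl: "filterlim tn (at_right t) sequentially"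
    unfolding filterlim_at using tn_lim tn_gt by (auto intro!: always_eventually simp: less_imp_neq[symmetric])
  have "(f \<longlongrightarrow> f t) (at_right t)" using rc[OF t0] by (simp add: continuous_within)
  then have "(\<lambda>n. f (tn n)) \<longlonglongrightarrow> f t" by (rule filterlim_compose[OF _ fl])
  then have "(\<lambda>n. \<bar>f (tn n)\<bar>) \<longlonglongrightarrow> \<bar>f t\<bar>" by (rule tendsto_rabs)
  moreover have "\<bar>f (tn n)\<bar> \<le> s" for n unfolding tn_def by (rule dm[OF kn_le])
  ultimately show ?thesis by (intro LIMSEQ_le_const2[of _ _ s]) auto
qed

lemma A2_sign:
  assumes "A2 J \<kappa> \<kappa>'"
  shows "v > 0 \<Longrightarrow> J j v \<le> 0" and "v < 0 \<Longrightarrow> J j v \<ge> 0"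
proof -
  have d: "\<exists>D. DERIV (J j) y :> D \<and> D \<le> 0" for y using assms unfolding A2_def by blast
  have z: "J j 0 = 0" using assms unfolding A2_def by blast
  show "v > 0 \<Longrightarrow> J j v \<le> 0"
    using DERIV_nonpos_imp_nonincreasing[of 0 v "J j"] d z by auto
  show "v < 0 \<Longrightarrow> J j v \<ge> 0"
    using DERIV_nonpos_imp_nonincreasing[of v 0 "J j"] d z by auto
qed

lemma fs_in_BB:
  fixes y :: "('d::finite \<Rightarrow> int) \<Rightarrow> real"
  assumes "finite G"
  shows "(\<lambda>k. if k \<in> G then y k else 0) \<in> BB"
proof -
  define R' where "R' = 1 + (\<Sum>k\<in>G. \<bar>y k\<bar>)"
  have R'0: "R' > 0" unfolding R'_def by (simp add: add_pos_nonneg sum_nonneg)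
  have "(\<lambda>k. if k \<in> G then y k else 0) \<in> BRrho R' 1"
    unfolding BRrho_def
  proof (intro CollectI allI)
    fix k :: "'d \<Rightarrow> int"
    have ln: "l1norm k \<ge> 0" unfolding l1norm_def by (simp add: sum_nonneg)
    have "\<bar>if k \<in> G then y k else 0\<bar> \<le> (\<Sum>k\<in>G. \<bar>y k\<bar>)"
      using assms by (auto intro: member_le_sum)
    also have "\<dots> \<le> R'" unfolding R'_def by simp
    also have "\<dots> \<le> R' * (l1norm k + 1)" using R'0 ln by simp
    also have "\<dots> = R' * (l1norm k + 1) powr 1" using ln by simp
    finally show "\<bar>if k \<in> G then y k else 0\<bar> \<le> R' * (l1norm k + 1) powr 1" .
  qed
  moreover have "(1::real) \<in> {0<..}" "R' \<in> {0<..}" using R'0 by auto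
  ultimately show ?thesis unfolding BB_def by blast
qed

lemma A1_Ibound:
  fixes y :: "('d::finite \<Rightarrow> int) \<Rightarrow> real"
  assumes A: "A1 a I" and fin: "finite G"
  shows "\<bar>I j (\<lambda>k. if k \<in> G then y k else 0)\<bar> \<le> (\<Sum>k\<in>G. a k j * \<bar>y k\<bar>)"
proof -
  have B1: "(\<lambda>k. if k \<in> G then y k else 0) \<in> BB" by (rule fs_in_BB[OF fin])
  have B0: "(\<lambda>_::'d \<Rightarrow> int. 0::real) \<in> BB" using fs_in_BB[OF fin, of "\<lambda>_. 0"] by simp
  have L: "\<bar>I j (\<lambda>k. if k \<in> G then y k else 0) - I j (\<lambda>_. 0)\<bar>
      \<le> (\<Sum>\<^sub>\<infinity>k. a k j * \<bar>(if k \<in> G then y k else 0) - 0\<bar>)"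
    using A B1 B0 unfolding A1_def by blast
  have z: "I j (\<lambda>_. 0) = 0" using A unfolding A1_def by blast
  have "(\<Sum>\<^sub>\<infinity>k. a k j * \<bar>(if k \<in> G then y k else 0) - 0\<bar>) = (\<Sum>\<^sub>\<infinity>k\<in>G. a k j * \<bar>y k\<bar>)"
    by (rule infsum_cong_neutral) auto
  also have "\<dots> = (\<Sum>k\<in>G. a k j * \<bar>y k\<bar>)" using fin by simp
  finally show ?thesis using L z by simp
qed

lemma finite_GammaN: "finite (GammaN N :: ('d::finite \<Rightarrow> int) set)"
proof -
  have "GammaN N \<subseteq> PiE (UNIV :: 'd set) (\<lambda>_. {- int N..int N})"
  proof
    fix g :: "'d \<Rightarrow> int" assume "g \<in> GammaN N"
    then have "\<bar>g k\<bar> \<le> int N" for k unfolding GammaN_def by auto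
    then have h: "g k \<in> {- int N..int N}" for k using abs_le_iff[of "g k" "int N"] by auto
    then show "g \<in> PiE (UNIV :: 'd set) (\<lambda>_. {- int N..int N})"
      by (simp add: PiE_iff)
  qed
  moreover have "finite (PiE (UNIV :: 'd set) (\<lambda>_. {- int N..int N}))" by (simp add: finite_PiE)
  ultimately show ?thesis by (rule finite_subset)
qed

definition Kc :: "real \<Rightarrow> real" where "Kc \<alpha> = 8 * 2 powr \<alpha> / (1 - 2 / 2 powr \<alpha>)"

lemma Kc_nonneg: "\<alpha> > 1 \<Longrightarrow> Kc \<alpha> \<ge> 0"
proof -
  assume a1: "\<alpha> > 1"
  have "2 powr \<alpha> > 2" using powr_less_mono[OF a1, of 2] by simp
  then show ?thesis unfolding Kc_def by (simp add: field_simps)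
qed

lemma main_bound:
  fixes M :: "'w measure" and Z :: "('d::finite \<Rightarrow> int) \<Rightarrow> real \<Rightarrow> 'w \<Rightarrow> real"
    and a :: "('d \<Rightarrow> int) \<Rightarrow> ('d \<Rightarrow> int) \<Rightarrow> real"
  assumes sf: "stable_family M \<alpha> Z" and A: "A1 a I" and Jc: "A2 J \<kappa> \<kappa>'"
    and xB: "x \<in> BRrho R \<rho>" and sol: "solves_N M Z J I N x X"
    and a1: "\<alpha> > 1" and R0: "R > 0" and r0: "\<rho> > 0" and L1: "L \<ge> 1"
    and Lw: "\<And>F i. finite F \<Longrightarrow> (\<Sum>j\<in>F. a j i * (L + l1norm j) powr \<rho>) \<le> (eta a + 1/2) * (L + l1norm i) powr \<rho>"
    and iG: "i \<in> GammaN N" and T0: "T \<ge> 0"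
  shows "(\<integral>\<^sup>+\<omega>. ennreal \<bar>X i T \<omega>\<bar> \<partial>M)
     \<le> ennreal (exp ((1 + eta a) * T) * (2 * (1 + eta a) * ((R + 2 + 2 * Kc \<alpha> * T) * (L + l1norm i) powr \<rho>)))"
proof -
  interpret prob_space M by (rule sf_prob[OF sf])
  have Zm[measurable]: "Z j t \<in> borel_measurable M" for j t using sf_meas[OF sf] by blast
  define G where "G = (GammaN N :: ('d \<Rightarrow> int) set)"
  have finG: "finite G" unfolding G_def by (rule finite_GammaN)
  have iG': "i \<in> G" unfolding G_def by (rule iG)
  define \<eta> where "\<eta> = eta a"
  have eta0: "\<eta> \<ge> 0" unfolding \<eta>_def by (rule eta_nonneg[OF A])
  define lam where "lam = 1 + \<eta>"
  have lam0: "lam > 0" unfolding lam_def using eta0 by simp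
  define K where "K = Kc \<alpha>"
  have K0: "K \<ge> 0" unfolding K_def using Kc_nonneg[OF a1] .
  define S where "S j \<omega> = (SUP n. ennreal (dmax Z j T n \<omega>))" for j \<omega>
  have Sm[measurable]: "S j \<in> borel_measurable M" for j
    unfolding S_def using dmax_meas[of Z j M T] by measurable
  have ES: "(\<integral>\<^sup>+\<omega>. S j \<omega> \<partial>M) \<le> ennreal (1 + K * T)" for j
  proof -
    have "(\<integral>\<^sup>+\<omega>. S j \<omega> \<partial>M) \<le> ennreal (1 + 8 * 2 powr \<alpha> * T / (1 - 2 / 2 powr \<alpha>))"
      unfolding S_def by (rule noise_sup[OF sf a1 T0])
    also have "8 * 2 powr \<alpha> * T / (1 - 2 / 2 powr \<alpha>) = K * T" unfolding K_def Kc_def by simp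
    finally show ?thesis .
  qed
  have Sfin: "AE \<omega> in M. \<forall>j\<in>G. S j \<omega> \<noteq> \<infinity>"
  proof (rule AE_finite_allI[OF finG])
    fix j show "AE \<omega> in M. S j \<omega> \<noteq> \<infinity>"
      by (rule nn_integral_noteq_infinite[OF Sm]) (use ES[of j] in \<open>auto simp: top_unique\<close>)
  qed
  have RC: "AE \<omega> in M. \<forall>j\<in>G. \<forall>t\<ge>0. continuous (at_right t) (\<lambda>s. Z j s \<omega>)"
    by (rule AE_finite_allI[OF finG]) (rule sf_rc[OF sf])
  have SOL: "AE \<omega> in M. \<forall>j\<in>G. \<forall>t\<ge>0.
        ((\<lambda>s. J j (X j s \<omega>) + I j (\<lambda>k. if k \<in> G then X k s \<omega> else 0))
           has_integral (X j t \<omega> - x j - Z j t \<omega>)) {0..t}"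
    using sol unfolding solves_N_def G_def by blast
  define c where "c j i' = a j i' / lam" for j i'
  have c0: "c j i' \<ge> 0" for j i' unfolding c_def using A1_a[OF A] lam0 by simp
  define q0 where "q0 = \<eta> / lam"
  have q0: "q0 \<ge> 0" "q0 < 1" unfolding q0_def lam_def using eta0 by auto
  have cs: "(\<Sum>j\<in>G. c j i') \<le> q0" for i'
  proof -
    have "(\<Sum>j\<in>G. c j i') = (\<Sum>j\<in>G. a j i') / lam" unfolding c_def by (simp add: sum_divide_distrib)
    also have "\<dots> \<le> \<eta> / lam" using col_sum_le_eta[OF A finG] lam0 unfolding \<eta>_def by (simp add: divide_right_mono)
    finally show ?thesis unfolding q0_def .
  qed
  define B\<omega> where "B\<omega> j \<omega> = (if j \<in> G then ennreal \<bar>x j\<bar> + 2 * S j \<omega> else 0)" for j \<omega>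
  have B\<omega>m[measurable]: "(\<lambda>\<omega>. B\<omega> j \<omega>) \<in> borel_measurable M" for j unfolding B\<omega>_def by measurable
  define Ve where "Ve \<omega> = (\<Sum>n. pwe G c n (\<lambda>j. B\<omega> j \<omega>) i)" for \<omega>
  have Vem[measurable]: "Ve \<in> borel_measurable M" unfolding Ve_def
    using pwe_meas[OF B\<omega>m, of G c] by measurable
  have PATH: "AE \<omega> in M. ennreal \<bar>X i T \<omega>\<bar> \<le> ennreal (exp (lam * T)) * Ve \<omega>"
    using Sfin RC SOL
  proof eventually_elim
    case (elim \<omega>)
    define s where "s j = enn2real (S j \<omega>)" for j
    have Ss: "S j \<omega> = ennreal (s j)" if "j \<in> G" for j
      unfolding s_def using elim(1) that by (simp add: less_top ennreal_enn2real)
    have s0: "s j \<ge> 0" for j unfolding s_def by simp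
    have zb: "\<bar>Z j t' \<omega>\<bar> \<le> s j" if "j \<in> G" "t' \<in> {0..T}" for j t'
    proof (rule path_bound[OF T0 _ _ that(2)])
      show "\<And>t. 0 \<le> t \<Longrightarrow> continuous (at_right t) (\<lambda>s. Z j s \<omega>)" using elim(2) that(1) by blast
      fix n k :: nat assume k: "k \<le> 2 ^ n"
      have "\<bar>Z j (T * real k / 2 ^ n) \<omega>\<bar> \<le> dmax Z j T n \<omega>" by (rule dmax_ge[OF k])
      moreover have "ennreal (dmax Z j T n \<omega>) \<le> S j \<omega>" unfolding S_def by (rule SUP_upper) simp
      then have "dmax Z j T n \<omega> \<le> s j" using Ss[OF that(1)] s0[of j] by (simp add: ennreal_le_iff)
      ultimately show "\<bar>Z j (T * real k / 2 ^ n) \<omega>\<bar> \<le> s j" by linarith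
    qed
    define B where "B j = (if j \<in> G then \<bar>x j\<bar> + 2 * s j else 0)" for j
    have B0: "B j \<ge> 0" for j unfolding B_def using s0[of j] by simp
    define Bm where "Bm = (\<Sum>j\<in>G. B j)"
    have Bb: "B j \<le> Bm" for j
    proof (cases "j \<in> G")
      case True then show ?thesis unfolding Bm_def using finG B0 by (intro member_le_sum) auto
    next
      case False
      have "B j = 0" unfolding B_def using False by simp
      also have "0 \<le> Bm" unfolding Bm_def by (rule sum_nonneg) (rule B0)
      finally show ?thesis .
    qed
    define V where "V j = (\<Sum>n. pw G c n B j)" for j
    have smV: "summable (\<lambda>n. pw G c n B j)" for j by (rule pw_summable[OF c0 B0 Bb cs q0])
    have VB: "B j \<le> V j" for j unfolding V_def by (rule pw_ge_B[OF c0 B0 Bb cs q0])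
    have fxp: "(\<Sum>k\<in>G. c k j * V k) = V j - B j" for j unfolding V_def by (rule pw_fixpoint[OF finG c0 B0 Bb cs q0])
    have "\<bar>X i T \<omega>\<bar> \<le> exp (lam * T) * V i"
    proof (rule pathwise_bound[where G=G and X="\<lambda>j t. X j t \<omega>" and z="\<lambda>j t. Z j t \<omega>"
          and g="\<lambda>j s. J j (X j s \<omega>) + I j (\<lambda>k. if k \<in> G then X k s \<omega> else 0)" and x=x and s=s
          and A=a and V=V and lam=lam and T=T, OF finG T0])
      show "lam \<ge> 0" using lam0 by simp
      show "((\<lambda>s. J j (X j s \<omega>) + I j (\<lambda>k. if k \<in> G then X k s \<omega> else 0)) has_integral (X j t \<omega> - x j - Z j t \<omega>)) {0..t}"
        if "j \<in> G" "t \<in> {0..T}" for j t using elim(3) that by auto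
      show "\<bar>Z j t \<omega>\<bar> \<le> s j" if "j \<in> G" "t \<in> {0..T}" for j t by (rule zb[OF that])
      show "J j (X j t \<omega>) + I j (\<lambda>k. if k \<in> G then X k t \<omega> else 0) \<le> (\<Sum>k\<in>G. a k j * \<bar>X k t \<omega>\<bar>)"
        if "j \<in> G" "t \<in> {0..T}" "X j t \<omega> > 0" for j t
        using A2_sign(1)[OF Jc that(3), of j] A1_Ibound[OF A finG, of j "\<lambda>k. X k t \<omega>"] by linarith
      show "- (J j (X j t \<omega>) + I j (\<lambda>k. if k \<in> G then X k t \<omega> else 0)) \<le> (\<Sum>k\<in>G. a k j * \<bar>X k t \<omega>\<bar>)"
        if "j \<in> G" "t \<in> {0..T}" "X j t \<omega> < 0" for j t
        using A2_sign(2)[OF Jc that(3), of j] A1_Ibound[OF A finG, of j "\<lambda>k. X k t \<omega>"] by linarith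
      show "a k j \<ge> 0" for k j by (rule A1_a(1)[OF A])
      show "V j \<ge> \<bar>x j\<bar> + 2 * s j" if "j \<in> G" for j using VB[of j] that unfolding B_def by simp
      show "(\<Sum>k\<in>G. a k j * V k) \<le> lam * V j" if "j \<in> G" for j
      proof -
        have "(\<Sum>k\<in>G. a k j * V k) = lam * (\<Sum>k\<in>G. c k j * V k)"
          unfolding c_def using lam0 by (simp add: sum_distrib_left)
        also have "\<dots> = lam * (V j - B j)" by (simp add: fxp)
        also have "\<dots> \<le> lam * V j" using B0[of j] lam0 by (simp add: mult_left_mono)
        finally show ?thesis .
      qed
      show "(\<Sum>k\<in>G. a k j) \<le> lam" if "j \<in> G" for j
        using col_sum_le_eta[OF A finG, of j] unfolding lam_def \<eta>_def by simp
    qed (rule iG')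
    then have "ennreal \<bar>X i T \<omega>\<bar> \<le> ennreal (exp (lam * T) * V i)" by (rule ennreal_leI)
    also have "\<dots> = ennreal (exp (lam * T)) * ennreal (V i)"
      using VB[of i] B0[of i] by (simp add: ennreal_mult)
    also have "ennreal (V i) = (\<Sum>n. ennreal (pw G c n B i))"
      unfolding V_def by (rule suminf_ennreal2[symmetric]) (use smV pw_nonneg[of c B, OF c0 B0] in auto)
    also have "\<dots> = (\<Sum>n. pwe G c n (\<lambda>j. ennreal (B j)) i)"
      by (simp add: pwe_ennreal[of c B, OF c0 B0])
    also have "(\<lambda>j. ennreal (B j)) = (\<lambda>j. B\<omega> j \<omega>)"
    proof
      fix j show "ennreal (B j) = B\<omega> j \<omega>"
        unfolding B_def B\<omega>_def using Ss[of j] s0[of j] by (simp add: ennreal_plus ennreal_mult)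
    qed
    finally show ?case unfolding Ve_def .
  qed
  define W where "W j = (L + l1norm j) powr \<rho>" for j :: "'d \<Rightarrow> int"
  have W1: "W j \<ge> 1" for j
  proof -
    have "1 \<le> L + l1norm j" using L1 l1norm_nonneg[of j] by simp
    then show ?thesis unfolding W_def using r0 by (simp add: ge_one_powr_ge_zero)
  qed
  define \<beta> where "\<beta> = R + 2 + 2 * K * T"
  have \<beta>0: "\<beta> \<ge> 0" unfolding \<beta>_def using R0 K0 T0 by simp
  have EB: "(\<integral>\<^sup>+\<omega>. B\<omega> j \<omega> \<partial>M) \<le> ennreal (\<beta> * W j)" for j
  proof (cases "j \<in> G")
    case False then show ?thesis unfolding B\<omega>_def by simp
  next
    case True
    have "(\<integral>\<^sup>+\<omega>. B\<omega> j \<omega> \<partial>M) = (\<integral>\<^sup>+\<omega>. ennreal \<bar>x j\<bar> + 2 * S j \<omega> \<partial>M)"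
      unfolding B\<omega>_def using True by simp
    also have "\<dots> = (\<integral>\<^sup>+\<omega>. ennreal \<bar>x j\<bar> \<partial>M) + (\<integral>\<^sup>+\<omega>. 2 * S j \<omega> \<partial>M)"
      by (rule nn_integral_add) auto
    also have "(\<integral>\<^sup>+\<omega>. ennreal \<bar>x j\<bar> \<partial>M) = ennreal \<bar>x j\<bar>"
      using prob_space by (simp add: emeasure_eq_measure)
    also have "(\<integral>\<^sup>+\<omega>. 2 * S j \<omega> \<partial>M) = 2 * (\<integral>\<^sup>+\<omega>. S j \<omega> \<partial>M)" by (rule nn_integral_cmult) simp
    also have "ennreal \<bar>x j\<bar> + 2 * (\<integral>\<^sup>+\<omega>. S j \<omega> \<partial>M) \<le> ennreal \<bar>x j\<bar> + 2 * ennreal (1 + K * T)"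
      using ES[of j] by (intro add_left_mono mult_left_mono) auto
    also have "\<dots> = ennreal (\<bar>x j\<bar> + 2 * (1 + K * T))"
      using K0 T0 by (simp add: ennreal_plus ennreal_mult)
    also have "\<dots> \<le> ennreal (\<beta> * W j)"
    proof (rule ennreal_leI)
      have "\<bar>x j\<bar> \<le> R * (l1norm j + 1) powr \<rho>" using xB unfolding BRrho_def by blast
      also have "\<dots> \<le> R * W j" unfolding W_def using R0 r0 L1 l1norm_nonneg[of j]
        by (intro mult_left_mono powr_mono2) auto
      finally have "\<bar>x j\<bar> \<le> R * W j" .
      moreover have "2 * (1 + K * T) \<le> 2 * (1 + K * T) * W j"
        using mult_left_mono[OF W1[of j], of "2 * (1 + K * T)"] K0 T0 by simp
      ultimately show "\<bar>x j\<bar> + 2 * (1 + K * T) \<le> \<beta> * W j" unfolding \<beta>_def by (simp add: algebra_simps)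
    qed
    finally show ?thesis .
  qed
  define q where "q = (\<eta> + 1/2) / lam"
  have q: "q \<ge> 0" "q < 1" unfolding q_def lam_def using eta0 by auto
  have cw: "(\<Sum>j\<in>G. c j i' * (\<beta> * W j)) \<le> q * (\<beta> * W i')" for i'
  proof -
    have "(\<Sum>j\<in>G. c j i' * (\<beta> * W j)) = \<beta> / lam * (\<Sum>j\<in>G. a j i' * W j)"
      unfolding c_def by (simp add: sum_distrib_left algebra_simps)
    also have "\<dots> \<le> \<beta> / lam * ((\<eta> + 1/2) * W i')"
      using Lw[OF finG, of i'] \<beta>0 lam0 unfolding W_def \<eta>_def by (intro mult_left_mono) auto
    also have "\<dots> = q * (\<beta> * W i')" unfolding q_def by simp
    finally show ?thesis .
  qed
  have "(\<integral>\<^sup>+\<omega>. Ve \<omega> \<partial>M) = (\<Sum>n. \<integral>\<^sup>+\<omega>. pwe G c n (\<lambda>j. B\<omega> j \<omega>) i \<partial>M)"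
    unfolding Ve_def by (rule nn_integral_suminf) (rule pwe_meas[OF B\<omega>m])
  also have "\<dots> = (\<Sum>n. pwe G c n (\<lambda>j. \<integral>\<^sup>+\<omega>. B\<omega> j \<omega> \<partial>M) i)"
    by (simp add: pwe_integral[OF finG B\<omega>m])
  also have "\<dots> \<le> (\<Sum>n. pwe G c n (\<lambda>j. ennreal (\<beta> * W j)) i)"
    by (intro suminf_le pwe_mono EB) auto
  also have "\<dots> \<le> (\<Sum>n. ennreal (q ^ n * (\<beta> * W i)))"
    by (intro suminf_le pwe_weight[OF c0] cw) (use \<beta>0 W1 q in \<open>auto intro: mult_nonneg_nonneg order_trans[OF zero_le_one]\<close>)
  also have "\<dots> = ennreal (\<Sum>n. q ^ n * (\<beta> * W i))"
    using q \<beta>0 W1[of i] by (intro suminf_ennreal2) (auto intro!: summable_mult2 summable_geometric)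
  also have "(\<Sum>n. q ^ n * (\<beta> * W i)) = \<beta> * W i / (1 - q)"
    using q by (simp add: suminf_mult2[symmetric] summable_geometric suminf_geometric)
  also have "1 - q = 1 / (2 * lam)" unfolding q_def lam_def using eta0 by (simp add: field_simps)
  finally have IV: "(\<integral>\<^sup>+\<omega>. Ve \<omega> \<partial>M) \<le> ennreal (\<beta> * W i / (1 / (2 * lam)))" .
  have "(\<integral>\<^sup>+\<omega>. ennreal \<bar>X i T \<omega>\<bar> \<partial>M) \<le> (\<integral>\<^sup>+\<omega>. ennreal (exp (lam * T)) * Ve \<omega> \<partial>M)"
    by (rule nn_integral_mono_AE[OF PATH])
  also have "\<dots> = ennreal (exp (lam * T)) * (\<integral>\<^sup>+\<omega>. Ve \<omega> \<partial>M)" by (rule nn_integral_cmult) simp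
  also have "\<dots> \<le> ennreal (exp (lam * T)) * ennreal (\<beta> * W i / (1 / (2 * lam)))"
    by (rule mult_left_mono[OF IV]) simp
  also have "ennreal (exp (lam * T)) * ennreal (\<beta> * W i / (1 / (2 * lam)))
      = ennreal (exp (lam * T) * (\<beta> * W i / (1 / (2 * lam))))"
    by (rule ennreal_mult'[symmetric]) simp
  also have "exp (lam * T) * (\<beta> * W i / (1 / (2 * lam)))
      = exp ((1 + eta a) * T) * (2 * (1 + eta a) * ((R + 2 + 2 * Kc \<alpha> * T) * (L + l1norm i) powr \<rho>))"
    unfolding lam_def \<eta>_def \<beta>_def K_def W_def by (simp add: algebra_simps)
  finally show ?thesis .
qed

lemma weight_poly:
  fixes L x \<rho> :: real assumes L1: "L \<ge> 1" and x0: "x \<ge> 0" and r0: "\<rho> > 0"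
  shows "(L + x) powr \<rho> \<le> (2 * L) powr \<rho> * (1 + x powr \<rho>)"
proof (cases "x \<le> 1")
  case True
  then have "(L + x) powr \<rho> \<le> (2 * L) powr \<rho>" using L1 x0 r0 by (intro powr_mono2) auto
  also have "\<dots> \<le> (2 * L) powr \<rho> * (1 + x powr \<rho>)"
    using mult_left_mono[of 1 "1 + x powr \<rho>" "(2 * L) powr \<rho>"] by simp
  finally show ?thesis .
next
  case False
  have h1: "L * 1 \<le> L * x" using L1 False by (intro mult_left_mono) auto
  have h2: "1 * x \<le> L * x" using L1 False by (intro mult_right_mono) auto
  have "L + x \<le> (2 * L) * x" using h1 h2 by linarith
  then have "(L + x) powr \<rho> \<le> ((2 * L) * x) powr \<rho>" using L1 x0 r0 by (intro powr_mono2) auto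
  also have "\<dots> = (2 * L) powr \<rho> * x powr \<rho>" using L1 x0 by (simp add: powr_mult)
  also have "\<dots> \<le> (2 * L) powr \<rho> * (1 + x powr \<rho>)" by (intro mult_left_mono) auto
  finally show ?thesis .
qed

theorem proposition3p1:
  fixes \<alpha> R \<rho> \<eta> :: real
  assumes "1 < \<alpha>" and "\<alpha> \<le> 2" and "R > 0" and "\<rho> > 0"
  shows "\<exists>C. \<forall>(M :: 'w measure) (Z :: ('d::finite \<Rightarrow> int) \<Rightarrow> real \<Rightarrow> 'w \<Rightarrow> real)
               a I J \<kappa> \<kappa>' N x X.
     stable_family M \<alpha> Z \<and> A1 a I \<and> A2 J \<kappa> \<kappa>' \<and> eta a = \<eta> \<and>
     x \<in> BRrho R \<rho> \<and> solves_N M Z J I N x X \<longrightarrow>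
     (\<forall>i\<in>GammaN N. \<forall>t\<ge>0.
        (\<integral>\<^sup>+ \<omega>. ennreal \<bar>X i t \<omega>\<bar> \<partial>M)
          \<le> ennreal (C * (1 + l1norm i powr \<rho>) * (1 + t) * exp ((1 + \<eta>) * t)))"
proof -
  have a1: "\<alpha> > 1" and R0: "R > 0" and r0: "\<rho> > 0" using assms by auto
  obtain L where L1: "L \<ge> 1" and Lw: "\<forall>(a :: ('d \<Rightarrow> int) \<Rightarrow> ('d \<Rightarrow> int) \<Rightarrow> real) I. A1 a I \<longrightarrow>
    (\<forall>F i. finite F \<longrightarrow> (\<Sum>j\<in>F. a j i * (L + l1norm j) powr \<rho>) \<le> (eta a + 1/2) * (L + l1norm i) powr \<rho>)"
    using weight_lemma[OF r0] by blast
  define C where "C = 2 * (1 + \<bar>\<eta>\<bar>) * (2 * L) powr \<rho> * (R + 2 + 2 * Kc \<alpha>)"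
  show ?thesis
  proof (rule exI[of _ C], intro allI impI ballI, goal_cases)
    case (1 M Z a I J \<kappa> \<kappa>' N x X i t)
    then have sf: "stable_family M \<alpha> Z" and A: "A1 a I" and Jc: "A2 J \<kappa> \<kappa>'" and eta: "eta a = \<eta>"
      and xB: "x \<in> BRrho R \<rho>" and sol: "solves_N M Z J I N x X" and iG: "i \<in> GammaN N" and T0: "t \<ge> 0"
      by auto
    have Lw': "\<And>F i. finite F \<Longrightarrow> (\<Sum>j\<in>F. a j i * (L + l1norm j) powr \<rho>) \<le> (eta a + 1/2) * (L + l1norm i) powr \<rho>"
      using Lw A by blast
    have eta0: "\<eta> \<ge> 0" using eta_nonneg[OF A] eta by simp
    have K0: "Kc \<alpha> \<ge> 0" by (rule Kc_nonneg[OF a1])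
    have MB: "(\<integral>\<^sup>+\<omega>. ennreal \<bar>X i t \<omega>\<bar> \<partial>M)
       \<le> ennreal (exp ((1 + eta a) * t) * (2 * (1 + eta a) * ((R + 2 + 2 * Kc \<alpha> * t) * (L + l1norm i) powr \<rho>)))"
      by (rule main_bound[OF sf A Jc xB sol a1 R0 r0 L1 Lw' iG T0])
    have b1: "R + 2 + 2 * Kc \<alpha> * t \<le> (R + 2 + 2 * Kc \<alpha>) * (1 + t)"
      using R0 K0 T0 by (simp add: algebra_simps mult_left_mono)
    have b2: "(L + l1norm i) powr \<rho> \<le> (2 * L) powr \<rho> * (1 + l1norm i powr \<rho>)"
      by (rule weight_poly[OF L1 l1norm_nonneg r0])
    have "(R + 2 + 2 * Kc \<alpha> * t) * (L + l1norm i) powr \<rho>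
        \<le> ((R + 2 + 2 * Kc \<alpha>) * (1 + t)) * ((2 * L) powr \<rho> * (1 + l1norm i powr \<rho>))"
      by (rule mult_mono[OF b1 b2]) (use R0 K0 T0 in auto)
    then have "exp ((1 + \<eta>) * t) * (2 * (1 + \<eta>) * ((R + 2 + 2 * Kc \<alpha> * t) * (L + l1norm i) powr \<rho>))
        \<le> exp ((1 + \<eta>) * t) * (2 * (1 + \<eta>) * (((R + 2 + 2 * Kc \<alpha>) * (1 + t)) * ((2 * L) powr \<rho> * (1 + l1norm i powr \<rho>))))"
      using eta0 by (intro mult_left_mono) auto
    also have "\<dots> = C * (1 + l1norm i powr \<rho>) * (1 + t) * exp ((1 + \<eta>) * t)"
      unfolding C_def using eta0 by (simp add: algebra_simps)
    finally show ?case using MB eta by (metis ennreal_leI order_trans)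
  qed
qed

end
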